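(* The assignment $\sigma:\mathcal W\to\mathfrak V$, $R_{\mathbf i}\mapsto S_{(\mathbf i,\mathbf m)}$, is a well-defined bijection (not necessarily a monoid homomorphism).
   Context: $I$ countable, $A=(a_{ij})$ a Borcherds–Cartan matrix ($a_{ii}=2$ or $a_{ii}\in\mathbb Z_{\le0}$; $a_{ij}\in\mathbb Z_{\le0}$ for $i\ne j$; $a_{ij}=0\iff a_{ji}=0$), $I^{re}=\{a_{ii}=2\}$, $I^{im}=I\setminus I^{re}$, with datum $(A,\{\alpha_i\},\{\alpha_i^\vee\},P,P^\vee)$, $\alpha_i^\vee(\alpha_j)=a_{ij}$, and $r_i\in GL(\mathfrak h^* )$, $r_i(\mu)=\mu-\alpha_i^\vee(\mu)\alpha_i$. The monoid $\mathcal W$ is generated by symbols $r_i$ ($i\in I$) subject to: $r_i^2=1$ for $i\in I^{re}$; $(r_ir_j)^m=(r_jr_i)^m=1$ for $i\neq j$ in $I^{re}$ when the order of $r_ir_j$ in $GL(\mathfrak h^* )$ is $m\in\{2,3,4,6\}$; $r_ir_j=r_jr_i$ for $i\in I^{im}$, $j\in I\setminus\{i\}$ with $a_{ij}=0$. For a finite sequence $\mathbf i=(i_k,\ldots,i_1)$ in $I$, $R_{\mathbf i}=r_{i_k}\cdots r_{i_1}\in\mathcal W$. Let $\tilde I=\{(i,1)\}_{i\in I^{re}}\sqcup\{(i,m)\}_{i\in I^{im},m\in\mathbb Z_{\ge1}}$ and $\mathfrak W$ the Coxeter group with generators $s_{(i,m)}$, $(i,m)\in\tilde I$, and Coxeter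 matrix $x_{(i,m),(i,m)}=1$; $x_{(i,1),(j,1)}$ = order of $r_ir_j$ in $GL(\mathfrak h^* )$ for $i,j\in I^{re}$; and for $i\in I^{im}$, $m\ge1$ and $(j,n)\ne(i,m)$: $x_{(i,m),(j,n)}=x_{(j,n),(i,m)}=2$ if $a_{ij}=0$ and $\infty$ otherwise. For $\mathbf i=(i_k,\dots,i_1)$, the ordered index $(\mathbf i,\mathbf m)$ has $\mathbf m=(m_k,\ldots,m_1)$ with $m_s=1$ if $i_s\in I^{re}$ and $m_s=\#\{1\le t\le s:i_t=i_s\}$ if $i_s\in I^{im}$; $S_{(\mathbf i,\mathbf m)}=s_{(i_k,m_k)}\cdots s_{(i_1,m_1)}\in\mathfrak W$, and $\mathfrak V=\{S_{(\mathbf i,\mathbf m)}:\mathbf i\text{ a finite sequence in }I\}\subset\mathfrak W$. *)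

theory Defs
  imports Main "HOL-Library.Extended_Nat" "HOL-Library.Countable"
begin

definition borcherds_cartan :: "('i \<Rightarrow> 'i \<Rightarrow> int) \<Rightarrow> bool" where
  "borcherds_cartan A \<longleftrightarrow>
     (\<forall>i. A i i = 2 \<or> A i i \<le> 0) \<and>
     (\<forall>i j. i \<noteq> j \<longrightarrow> A i j \<le> 0) \<and>
     (\<forall>i j. A i j = 0 \<longleftrightarrow> A j i = 0)"

definition re_idx :: "('i \<Rightarrow> 'i \<Rightarrow> int) \<Rightarrow> 'i set" where
  "re_idx A = {i. A i i = 2}"

definition srefl :: "(complex \<Rightarrow> 'v \<Rightarrow> 'v::ab_group_add) \<Rightarrow> ('i \<Rightarrow> 'v) \<Rightarrow> ('i \<Rightarrow> 'v \<Rightarrow> complex)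
    \<Rightarrow> 'i \<Rightarrow> 'v \<Rightarrow> 'v" where
  "srefl scale alpha coroot i mu = mu - scale (coroot i mu) (alpha i)"

definition map_order :: "('v \<Rightarrow> 'v) \<Rightarrow> enat" where
  "map_order f = (if \<exists>m>0. (f ^^ m) = id then enat (LEAST m. m > 0 \<and> (f ^^ m) = id) else \<infinity>)"

definition rr_order :: "(complex \<Rightarrow> 'v \<Rightarrow> 'v::ab_group_add) \<Rightarrow> ('i \<Rightarrow> 'v) \<Rightarrow> ('i \<Rightarrow> 'v \<Rightarrow> complex)
    \<Rightarrow> 'i \<Rightarrow> 'i \<Rightarrow> enat" where
  "rr_order scale alpha coroot i j = map_order (srefl scale alpha coroot i \<circ> srefl scale alpha coroot j)"

inductive cong_cl :: "('a list \<Rightarrow> 'a list \<Rightarrow> bool) \<Rightarrow> 'a list \<Rightarrow> 'a list \<Rightarrow> bool" for R where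
  base: "R u v \<Longrightarrow> cong_cl R (xs @ u @ ys) (xs @ v @ ys)"
| refl: "cong_cl R u u"
| sym: "cong_cl R u v \<Longrightarrow> cong_cl R v u"
| trans: "cong_cl R u v \<Longrightarrow> cong_cl R v w \<Longrightarrow> cong_cl R u w"

text \<open>A word [i_k, ..., i_1] stands for r_{i_k} ... r_{i_1}.\<close>
definition W_rel :: "('i \<Rightarrow> 'i \<Rightarrow> int) \<Rightarrow> ('i \<Rightarrow> 'i \<Rightarrow> enat) \<Rightarrow> 'i list \<Rightarrow> 'i list \<Rightarrow> bool" where
  "W_rel A ord u v \<longleftrightarrow>
     (\<exists>i. A i i = 2 \<and> u = [i, i] \<and> v = []) \<or>
     (\<exists>i j m. i \<noteq> j \<and> A i i = 2 \<and> A j j = 2 \<and> ord i j = enat m \<and> m \<in> {2, 3, 4, 6} \<and>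
        (u = concat (replicate m [i, j]) \<or> u = concat (replicate m [j, i])) \<and> v = []) \<or>
     (\<exists>i j. A i i \<noteq> 2 \<and> j \<noteq> i \<and> A i j = 0 \<and>
        ((u = [i, j] \<and> v = [j, i]) \<or> (u = [j, i] \<and> v = [i, j])))"

definition W_class :: "('i \<Rightarrow> 'i \<Rightarrow> int) \<Rightarrow> ('i \<Rightarrow> 'i \<Rightarrow> enat) \<Rightarrow> 'i list \<Rightarrow> 'i list set" where
  "W_class A ord xs = {ys. cong_cl (W_rel A ord) xs ys}"

definition W_monoid :: "('i \<Rightarrow> 'i \<Rightarrow> int) \<Rightarrow> ('i \<Rightarrow> 'i \<Rightarrow> enat) \<Rightarrow> 'i list set set" where
  "W_monoid A ord = range (W_class A ord)"

definition tilde_I :: "('i \<Rightarrow> 'i \<Rightarrow> int) \<Rightarrow> ('i \<times> nat) set" where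
  "tilde_I A = {(i, 1) | i. A i i = 2} \<union> {(i, m) | i m. A i i \<noteq> 2 \<and> m \<ge> 1}"

definition cox_mat :: "('i \<Rightarrow> 'i \<Rightarrow> int) \<Rightarrow> ('i \<Rightarrow> 'i \<Rightarrow> enat) \<Rightarrow> ('i \<times> nat) \<Rightarrow> ('i \<times> nat) \<Rightarrow> enat" where
  "cox_mat A ord a b =
     (if a = b then 1
      else if A (fst a) (fst a) = 2 \<and> A (fst b) (fst b) = 2 then ord (fst a) (fst b)
      else if A (fst a) (fst a) \<noteq> 2 then (if A (fst a) (fst b) = 0 then 2 else \<infinity>)
      else (if A (fst b) (fst a) = 0 then 2 else \<infinity>))"

text \<open>Coxeter presentation: (s_a s_b)^{x_{ab}} = 1 whenever x_{ab} is finite (includes s_a^2 = 1).\<close>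
definition C_rel :: "('i \<Rightarrow> 'i \<Rightarrow> int) \<Rightarrow> ('i \<Rightarrow> 'i \<Rightarrow> enat) \<Rightarrow> ('i \<times> nat) list \<Rightarrow> ('i \<times> nat) list \<Rightarrow> bool" where
  "C_rel A ord u v \<longleftrightarrow>
     (\<exists>a b k. a \<in> tilde_I A \<and> b \<in> tilde_I A \<and> cox_mat A ord a b = enat k \<and>
        u = concat (replicate k [a, b]) \<and> v = [])"

definition C_class :: "('i \<Rightarrow> 'i \<Rightarrow> int) \<Rightarrow> ('i \<Rightarrow> 'i \<Rightarrow> enat) \<Rightarrow> ('i \<times> nat) list \<Rightarrow> ('i \<times> nat) list set" where
  "C_class A ord ws = {vs. vs \<in> lists (tilde_I A) \<and> cong_cl (C_rel A ord) ws vs}"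

definition cox_group :: "('i \<Rightarrow> 'i \<Rightarrow> int) \<Rightarrow> ('i \<Rightarrow> 'i \<Rightarrow> enat) \<Rightarrow> ('i \<times> nat) list set set" where
  "cox_group A ord = C_class A ord ` lists (tilde_I A)"

text \<open>For xs = [i_k, ..., i_1], position p (0-based from the left) is s = k - p;
  m_s = 1 for real i_s, otherwise the number of occurrences of i_s among i_s, ..., i_1.\<close>
definition ordered_index :: "('i \<Rightarrow> 'i \<Rightarrow> int) \<Rightarrow> 'i list \<Rightarrow> ('i \<times> nat) list" where
  "ordered_index A xs =
     map (\<lambda>p. (xs ! p, if A (xs ! p) (xs ! p) = 2 then 1 else count_list (drop p xs) (xs ! p)))
         [0..<length xs]"

definition V_set :: "('i \<Rightarrow> 'i \<Rightarrow> int) \<Rightarrow> ('i \<Rightarrow> 'i \<Rightarrow> enat) \<Rightarrow> ('i \<times> nat) list set set" where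
  "V_set A ord = {C_class A ord (ordered_index A xs) | xs. True}"

end

theory Submission
  imports Defs "HOL-Library.Function_Algebras"
begin

fun alt :: "nat \<Rightarrow> 'a \<Rightarrow> 'a \<Rightarrow> 'a list" where
  "alt 0 a b = []"
| "alt (Suc n) a b = a # alt n b a"

lemma length_alt[simp]: "length (alt n a b) = n"
  by (induction n arbitrary: a b) auto

lemma alt_add: "alt (n + k) a b = alt n a b @ (if even n then alt k a b else alt k b a)"
  by (induction n arbitrary: a b) auto

lemma alt_Suc_snoc: "alt (Suc n) a b = alt n a b @ [if even n then a else b]"
  using alt_add[of n 1 a b] by auto

lemma rev_alt: "rev (alt n a b) = (if even n then alt n b a else alt n a b)"
proof (induction n arbitrary: a b)
  case 0 then show ?case by simp
next
  case (Suc n)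
  show ?case using Suc[of b a] Suc[of a b] alt_Suc_snoc[of n a b] alt_Suc_snoc[of n b a]
    by (auto simp: alt_Suc_snoc)
qed

lemma concat_replicate_alt: "concat (replicate k [a,b]) = alt (2*k) a b"
  by (induction k) auto

lemma set_alt: "set (alt n a b) \<subseteq> {a,b}"
  by (induction n arbitrary: a b) auto

lemma count_alt_a: "a \<noteq> b \<Longrightarrow> count_list (alt n a b) a = (n+1) div 2"
  and count_alt_b: "a \<noteq> b \<Longrightarrow> count_list (alt n a b) b = n div 2"
proof (induction n arbitrary: a b)
  case 0
  { case 1 then show ?case by simp }
  { case 2 then show ?case by simp }
next
  case (Suc n)
  { case 1 then show ?case using Suc(2)[of b a] by auto }
  { case 2 then show ?case using Suc(1)[of b a] by auto }
qed

lemma count_alt_other: "c \<noteq> a \<Longrightarrow> c \<noteq> b \<Longrightarrow> count_list (alt n a b) c = 0"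
  by (induction n arbitrary: a b) auto

lemma cong_cl_ctx: "cong_cl R u v \<Longrightarrow> cong_cl R (x @ u @ y) (x @ v @ y)"
proof (induction rule: cong_cl.induct)
  case (base u v xs ys)
  then show ?case using cong_cl.base[of R u v "x @ xs" "ys @ y"] by simp
next
  case (refl u) show ?case by (rule cong_cl.refl)
next
  case (sym u v) then show ?case by (blast intro: cong_cl.sym)
next
  case (trans u v w) then show ?case by (meson cong_cl.trans)
qed

lemma cong_cl_app: "cong_cl R u v \<Longrightarrow> cong_cl R u' v' \<Longrightarrow> cong_cl R (u @ u') (v @ v')"
  using cong_cl_ctx[of R u v "[]" u'] cong_cl_ctx[of R u' v' v "[]"]
  by (auto intro: cong_cl.trans)

lemma cong_cl_base1: "R u v \<Longrightarrow> cong_cl R u v"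
  using cong_cl.base[of R u v "[]" "[]"] by simp

lemma cong_cl_Cons: "cong_cl R u v \<Longrightarrow> cong_cl R (s # u) (s # v)"
  using cong_cl_ctx[of R u v "[s]" "[]"] by simp

lemma cong_cl_mono: "cong_cl R u v \<Longrightarrow> (\<And>u v. R u v \<Longrightarrow> cong_cl R' u v) \<Longrightarrow> cong_cl R' u v"
proof (induction rule: cong_cl.induct)
  case (base u v xs ys) then show ?case by (simp add: cong_cl_ctx)
next
  case (refl u) show ?case by (rule cong_cl.refl)
next
  case (sym u v) then show ?case by (simp add: cong_cl.sym)
next
  case (trans u v w) then show ?case by (meson cong_cl.trans)
qed

lemma cong_cl_map: "cong_cl R u v \<Longrightarrow> (\<And>u v. R u v \<Longrightarrow> cong_cl R' (map f u) (map f v))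
   \<Longrightarrow> cong_cl R' (map f u) (map f v)"
proof (induction rule: cong_cl.induct)
  case (base u v xs ys) then show ?case by (simp add: cong_cl_ctx)
next
  case (refl u) show ?case by (rule cong_cl.refl)
next
  case (sym u v) then show ?case by (simp add: cong_cl.sym)
next
  case (trans u v w) then show ?case by (meson cong_cl.trans)
qed

section \<open>Coxeter presentations\<close>

definition crel :: "'g set \<Rightarrow> ('g \<Rightarrow> 'g \<Rightarrow> enat) \<Rightarrow> 'g list \<Rightarrow> 'g list \<Rightarrow> bool" where
  "crel S m u v \<longleftrightarrow> (\<exists>a b k. a \<in> S \<and> b \<in> S \<and> m a b = enat k \<and>
        u = concat (replicate k [a, b]) \<and> v = [])"

fun refls :: "'g list \<Rightarrow> 'g list list" where
  "refls [] = []"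
| "refls (s # w) = [s] # map (\<lambda>r. s # r @ [s]) (refls w)"

lemma length_refls[simp]: "length (refls w) = length w"
  by (induction w) auto

lemma refls_append: "refls (x @ y) = refls x @ map (\<lambda>r. x @ r @ rev x) (refls y)"
  by (induction x) auto

lemma refls_alt: "refls (alt n a b) = map (\<lambda>l. alt (2*l+1) a b) [0..<n]"
proof (induction n arbitrary: a b)
  case 0 then show ?case by simp
next
  case (Suc n)
  have e: "a # alt (2*l+1) b a @ [a] = alt (2*Suc l+1) a b" for l
  proof -
    have h: "alt (Suc (2*l+1)) b a = alt (2*l+1) b a @ [a]"
      using alt_Suc_snoc[of "2*l+1" b a] by simp
    have "2*Suc l+1 = Suc (Suc (2*l+1))" by simp
    then have "alt (2*Suc l+1) a b = a # alt (Suc (2*l+1)) b a"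
      by (subst \<open>2*Suc l+1 = Suc (Suc (2*l+1))\<close>) (rule alt.simps(2))
    then show ?thesis using h by simp
  qed
  have "[0..<Suc n] = 0 # map Suc [0..<n]" by (simp add: map_Suc_upt upt_conv_Cons)
  then show ?case using Suc[of b a] e by simp
qed

lemma refls_nth_len: "refls (x @ s # r) ! length x = x @ [s] @ rev x"
  by (simp add: refls_append nth_append)

locale cox =
  fixes S :: "'g set" and m :: "'g \<Rightarrow> 'g \<Rightarrow> enat"
  assumes m_diag: "a \<in> S \<Longrightarrow> m a a = 1"
    and m_sym: "a \<in> S \<Longrightarrow> b \<in> S \<Longrightarrow> m a b = m b a"
    and m_ge2: "a \<in> S \<Longrightarrow> b \<in> S \<Longrightarrow> a \<noteq> b \<Longrightarrow> 2 \<le> m a b"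
    and dihedral: "a \<in> S \<Longrightarrow> b \<in> S \<Longrightarrow> a \<noteq> b \<Longrightarrow> 0 < d \<Longrightarrow> enat d < m a b
        \<Longrightarrow> \<not> cong_cl (crel S m) (alt (2*d) a b) []"
begin

abbreviation E where "E \<equiv> cong_cl (crel S m)"

lemma E_refl[simp]: "E u u" by (rule cong_cl.refl)
lemma E_sym: "E u v \<Longrightarrow> E v u" by (rule cong_cl.sym)
lemma E_trans: "E u v \<Longrightarrow> E v w \<Longrightarrow> E u w" by (rule cong_cl.trans)
lemma E_ctx: "E u v \<Longrightarrow> E (x @ u @ y) (x @ v @ y)" by (rule cong_cl_ctx)
lemma E_app: "E u v \<Longrightarrow> E u' v' \<Longrightarrow> E (u @ u') (v @ v')" by (rule cong_cl_app)
lemma E_Cons: "E u v \<Longrightarrow> E (s # u) (s # v)" by (rule cong_cl_Cons)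

lemma E_lists: "E u v \<Longrightarrow> u \<in> lists S \<longleftrightarrow> v \<in> lists S"
proof (induction rule: cong_cl.induct)
  case (base u v xs ys)
  then obtain a b k where "a \<in> S" "b \<in> S" "u = alt (2*k) a b" "v = []"
    unfolding crel_def by (auto simp: concat_replicate_alt)
  then have "set u \<subseteq> S" "v = []" using set_alt[of "2*k" a b] by auto
  then show ?case by auto
qed auto

lemma E_alt: "a \<in> S \<Longrightarrow> b \<in> S \<Longrightarrow> m a b = enat k \<Longrightarrow> E (alt (2*k) a b) []"
  using cong_cl_base1[of "crel S m" "alt (2*k) a b" "[]"] unfolding crel_def
  by (auto simp: concat_replicate_alt)

lemma E_ss: "s \<in> S \<Longrightarrow> E [s, s] []"
  using E_alt[of s s 1] m_diag[of s] by (simp add: one_enat_def numeral_2_eq_2)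

lemma E_ss_ctx: "s \<in> S \<Longrightarrow> E (x @ s # s # y) (x @ y)"
  using E_ctx[OF E_ss[of s], of x y] by simp

lemma E_inv: "w \<in> lists S \<Longrightarrow> E (w @ rev w) []"
proof (induction w)
  case Nil then show ?case by simp
next
  case (Cons s w)
  have "E (s # w @ rev w @ [s]) (s # [] @ [s])"
    using E_ctx[OF Cons.IH[OF _], of "[s]" "[s]"] Cons.prems by auto
  moreover have "E [s, s] []" using E_ss Cons.prems by auto
  ultimately show ?case by (auto intro: E_trans)
qed

lemma E_inv': "w \<in> lists S \<Longrightarrow> E (rev w @ w) []"
  using E_inv[of "rev w"] by (simp add: in_lists_conv_set)

lemma E_cancel_left: "x \<in> lists S \<Longrightarrow> E (x @ u) (x @ v) \<Longrightarrow> E u v"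
proof -
  assume x: "x \<in> lists S" and h: "E (x @ u) (x @ v)"
  have "E (rev x @ (x @ u)) (rev x @ (x @ v))" using E_ctx[OF h, of "rev x" "[]"] by simp
  moreover have "E (rev x @ x @ u) u" using E_ctx[OF E_inv'[OF x], of "[]" u] by simp
  moreover have "E (rev x @ x @ v) v" using E_ctx[OF E_inv'[OF x], of "[]" v] by simp
  ultimately show ?thesis by (meson E_sym E_trans)
qed

lemma E_cancel_right: "x \<in> lists S \<Longrightarrow> E (u @ x) (v @ x) \<Longrightarrow> E u v"
proof -
  assume x: "x \<in> lists S" and h: "E (u @ x) (v @ x)"
  have "E ((u @ x) @ rev x) ((v @ x) @ rev x)" using E_ctx[OF h, of "[]" "rev x"] by simp
  moreover have "E (u @ x @ rev x) u" using E_ctx[OF E_inv[OF x], of u "[]"] by simp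
  moreover have "E (v @ x @ rev x) v" using E_ctx[OF E_inv[OF x], of v "[]"] by simp
  ultimately show ?thesis by (metis E_sym E_trans append_assoc)
qed

lemma E_Nil_rev: "u \<in> lists S \<Longrightarrow> E u [] \<Longrightarrow> E (rev u) []"
proof -
  assume u: "u \<in> lists S" and h: "E u []"
  have "E (rev u @ u) (rev u @ [])" using E_ctx[OF h, of "rev u" "[]"] by simp
  then show ?thesis using E_inv'[OF u] by (metis E_sym E_trans append_Nil2)
qed

end


context cox begin

definition cnt :: "'g list \<Rightarrow> 'g list \<Rightarrow> nat" where
  "cnt w t = length (filter (\<lambda>r. E r t) (refls w))"

lemma filter_map_len: "length (filter P (map f l)) = length (filter (\<lambda>x. P (f x)) l)"
  by (simp add: filter_map comp_def)

lemma filter_len_cong: "(\<And>x. x \<in> set l \<Longrightarrow> P x \<longleftrightarrow> Q x) \<Longrightarrow> length (filter P l) = length (filter Q l)"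
  by (metis filter_cong)

lemma cnt_base:
  assumes ab: "a \<in> S" "b \<in> S" "m a b = enat k" and xs: "xs \<in> lists S" and ys: "ys \<in> lists S"
  shows "cnt (xs @ alt (2*k) a b @ ys) t = cnt (xs @ ys) t +
     2 * length (filter (\<lambda>l. E (xs @ alt (2*l+1) a b @ rev xs) t) [0..<k])"
proof -
  let ?u = "alt (2*k) a b"
  let ?P = "\<lambda>r. E r t"
  have uS: "?u \<in> lists S" using set_alt[of "2*k" a b] ab by auto
  have u1: "E ?u []" using E_alt[OF ab] .
  have u2: "E (rev ?u) []" using E_Nil_rev[OF uS u1] .
  have "refls (xs @ ?u @ ys) = refls xs @ map (\<lambda>r. xs @ r @ rev xs) (refls ?u)
      @ map (\<lambda>r. xs @ (?u @ r @ rev ?u) @ rev xs) (refls ys)"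
    by (simp add: refls_append)
  then have c1: "cnt (xs @ ?u @ ys) t = length (filter ?P (refls xs))
      + length (filter (\<lambda>r. ?P (xs @ r @ rev xs)) (refls ?u))
      + length (filter (\<lambda>r. ?P (xs @ (?u @ r @ rev ?u) @ rev xs)) (refls ys))"
    unfolding cnt_def by (simp add: filter_map_len comp_def)
  have c2: "cnt (xs @ ys) t = length (filter ?P (refls xs))
      + length (filter (\<lambda>r. ?P (xs @ r @ rev xs)) (refls ys))"
    unfolding cnt_def by (simp add: refls_append filter_map_len comp_def)
  have e3: "?P (xs @ (?u @ r @ rev ?u) @ rev xs) \<longleftrightarrow> ?P (xs @ r @ rev xs)" for r
  proof -
    have "E (?u @ r @ rev ?u) ([] @ r @ [])" using E_app[OF u1 E_app[OF E_refl u2]] by simp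
    then have "E (xs @ (?u @ r @ rev ?u) @ rev xs) (xs @ r @ rev xs)"
      using E_ctx by fastforce
    then show ?thesis by (meson E_sym E_trans)
  qed
  let ?Q = "\<lambda>l. E (xs @ alt (2*l+1) a b @ rev xs) t"
  have m1: "length (filter (\<lambda>r. ?P (xs @ r @ rev xs)) (refls ?u)) = length (filter ?Q [0..<2*k])"
    by (simp add: refls_alt filter_map_len comp_def)
  have split: "[0..<2*k] = [0..<k] @ map (\<lambda>l. l + k) [0..<k]"
    by (metis add_0 map_add_upt mult_2 upt_add_eq_append zero_le)
  have q: "?Q (l + k) \<longleftrightarrow> ?Q l" for l
  proof -
    have "alt (2*(l+k)+1) a b = ?u @ alt (2*l+1) a b"
      using alt_add[of "2*k" "2*l+1" a b] by (simp add: algebra_simps)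
    moreover have "E (?u @ alt (2*l+1) a b) ([] @ alt (2*l+1) a b)" using E_app[OF u1 E_refl] .
    ultimately have "E (xs @ alt (2*(l+k)+1) a b @ rev xs) (xs @ alt (2*l+1) a b @ rev xs)"
      using E_ctx by fastforce
    then show ?thesis by (meson E_sym E_trans)
  qed
  have "length (filter ?Q (map (\<lambda>l. l + k) [0..<k])) = length (filter (\<lambda>l. ?Q (l+k)) [0..<k])"
    by (rule filter_map_len)
  also have "\<dots> = length (filter ?Q [0..<k])" by (intro filter_len_cong) (rule q)
  finally have "length (filter ?Q [0..<2*k]) = 2 * length (filter ?Q [0..<k])"
    unfolding split by simp
  then show ?thesis using c1 c2 m1 e3 by simp
qed

lemma cnt_inv: "E w w' \<Longrightarrow> w \<in> lists S \<Longrightarrow> even (cnt w t) = even (cnt w' t)"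
proof (induction rule: cong_cl.induct)
  case (base u v xs ys)
  from base(1) obtain a b k where ab: "a \<in> S" "b \<in> S" "m a b = enat k" and u: "u = alt (2*k) a b" and v: "v = []"
    unfolding crel_def by (auto simp: concat_replicate_alt)
  have xy: "xs \<in> lists S" "ys \<in> lists S" using base(2) by auto
  show ?case using cnt_base[OF ab xy, of t] u v by simp
next
  case (refl u) then show ?case by simp
next
  case (sym u v) then show ?case using E_lists by metis
next
  case (trans u v w) then show ?case using E_lists by metis
qed

end

lemma split2: "i < j \<Longrightarrow> j < length w \<Longrightarrow>
   \<exists>x s y s' z. w = x @ s # y @ s' # z \<and> length x = i \<and> length y = j - i - 1"
proof -
  assume ij: "i < j" "j < length w"
  let ?r = "drop (Suc i) w"
  have w1: "w = take i w @ w!i # ?r" using id_take_nth_drop[of i w] ij by simp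
  have "j - i - 1 < length ?r" using ij by simp
  then have r1: "?r = take (j-i-1) ?r @ ?r!(j-i-1) # drop (Suc (j-i-1)) ?r"
    using id_take_nth_drop by blast
  have "w = take i w @ w!i # take (j-i-1) ?r @ ?r!(j-i-1) # drop (Suc (j-i-1)) ?r"
    using w1 r1 by metis
  moreover have "length (take i w) = i" "length (take (j-i-1) ?r) = j - i - 1" using ij by auto
  ultimately show ?thesis by blast
qed

context cox begin

definition reduced :: "'g list \<Rightarrow> bool" where
  "reduced w \<longleftrightarrow> w \<in> lists S \<and> (\<forall>w'. E w w' \<longrightarrow> length w \<le> length w')"

lemma reduced_lists: "reduced w \<Longrightarrow> w \<in> lists S" by (simp add: reduced_def)

lemma reduced_len: "reduced u \<Longrightarrow> reduced v \<Longrightarrow> E u v \<Longrightarrow> length u = length v"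
  unfolding reduced_def by (meson E_sym antisym)

lemma reduced_E: "reduced w \<Longrightarrow> E w x \<Longrightarrow> length x = length w \<Longrightarrow> reduced x"
  unfolding reduced_def using E_lists by (metis E_sym E_trans)

lemma reduced_Nil[simp]: "reduced []" by (simp add: reduced_def)

lemma reduced_append: "reduced (x @ y) \<Longrightarrow> reduced x \<and> reduced y"
proof -
  assume r: "reduced (x @ y)"
  have xy: "x \<in> lists S" "y \<in> lists S" using r by (auto simp: reduced_def)
  have "length x \<le> length x'" if "E x x'" for x'
  proof -
    have "E (x @ y) (x' @ y)" using E_app[OF that E_refl] .
    then show ?thesis using r by (fastforce simp: reduced_def)
  qed
  moreover have "length y \<le> length y'" if "E y y'" for y'
  proof -
    have "E (x @ y) (x @ y')" using E_app[OF E_refl that] .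
    then show ?thesis using r by (fastforce simp: reduced_def)
  qed
  ultimately show ?thesis using xy by (simp add: reduced_def)
qed

lemma deletion:
  assumes "x @ s # y @ s' # z \<in> lists S" and "E (s # y) (y @ [s'])"
  shows "E (x @ s # y @ s' # z) (x @ y @ z)"
proof -
  have s': "s' \<in> S" using assms(1) by auto
  have "E ((s # y) @ s' # z) ((y @ [s']) @ s' # z)" using E_app[OF assms(2) E_refl] .
  moreover have "E (y @ s' # s' # z) (y @ z)" using E_ss_ctx[OF s'] .
  ultimately have "E (s # y @ s' # z) (y @ z)" by (auto intro: E_trans)
  then show ?thesis using E_ctx[of "s # y @ s' # z" "y @ z" x "[]"] by simp
qed

lemma refl_eq_swap:
  assumes w: "x @ s # y @ s' # z \<in> lists S"
    and h: "E (refls (x @ s # y @ s' # z) ! length x)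
              (refls (x @ s # y @ s' # z) ! (length x + 1 + length y))"
  shows "E (s # y) (y @ [s'])"
proof -
  have xS: "x \<in> lists S" and sS: "s \<in> S" and yS: "y \<in> lists S" and s'S: "s' \<in> S" using w by auto
  have r1: "refls (x @ s # y @ s' # z) ! length x = x @ [s] @ rev x"
    using refls_nth_len[of x s "y @ s' # z"] by simp
  have r2: "refls (x @ s # y @ s' # z) ! (length x + 1 + length y)
        = (x @ s # y) @ [s'] @ rev (x @ s # y)"
    using refls_nth_len[of "x @ s # y" s' z] by simp
  have "E (x @ ([s] @ rev x)) (x @ (s # y @ [s'] @ rev y @ [s] @ rev x))"
    using h r1 r2 by simp
  then have "E ([s] @ rev x) ((s # y @ [s'] @ rev y @ [s]) @ rev x)"
    using E_cancel_left[OF xS] by simp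
  then have "E [s] (s # y @ [s'] @ rev y @ [s])"
    using E_cancel_right[of "rev x"] xS by (simp add: in_lists_conv_set)
  then have h2: "E ([s] @ []) ([s] @ (y @ [s'] @ rev y @ [s]))" by simp
  have Z: "E [] (y @ [s'] @ rev y @ [s])"
    using E_cancel_left[OF _ h2] sS by simp
  have "E ([] @ (s # y)) ((y @ [s'] @ rev y @ [s]) @ (s # y))" using E_app[OF Z E_refl] .
  moreover have "E (y @ [s'] @ rev y @ [s, s] @ y) (y @ [s'] @ rev y @ y)"
    using E_ctx[OF E_ss[OF sS], of "y @ [s'] @ rev y" y] by simp
  moreover have "E (y @ [s'] @ (rev y @ y)) (y @ [s'] @ [])"
    using E_ctx[OF E_inv'[OF yS], of "y @ [s']" "[]"] by simp
  ultimately show ?thesis by (auto intro: E_trans)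
qed

lemma reduced_no_swap:
  assumes r: "reduced (x @ s # y @ s' # z)"
  shows "\<not> E (s # y) (y @ [s'])"
proof
  assume "E (s # y) (y @ [s'])"
  then have "E (x @ s # y @ s' # z) (x @ y @ z)" using deletion r reduced_lists by blast
  then show False using r unfolding reduced_def by fastforce
qed

lemma no_swap_reduced:
  assumes w: "w \<in> lists S"
    and ns: "\<And>x s y s' z. w = x @ s # y @ s' # z \<Longrightarrow> \<not> E (s # y) (y @ [s'])"
  shows "reduced w"
proof -
  have dist: "\<not> E (refls w ! i) (refls w ! j)" if ij: "i < j" "j < length w" for i j
  proof
    assume h: "E (refls w ! i) (refls w ! j)"
    obtain x s y s' z where d: "w = x @ s # y @ s' # z" "length x = i" "length y = j - i - 1"
      using split2[OF ij] by blast
    have "length x + 1 + length y = j" using d ij by simp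
    then have "E (s # y) (y @ [s'])" using refl_eq_swap[of x s y s' z] h w d by simp
    then show False using ns d by blast
  qed
  have dist': "E (refls w ! i) (refls w ! j) \<Longrightarrow> i < length w \<Longrightarrow> j < length w \<Longrightarrow> i = j" for i j
    using dist[of i j] dist[of j i] E_sym by (metis linorder_neqE_nat)
  have "length w \<le> length w'" if ww: "E w w'" for w'
  proof -
    have ex: "\<exists>j < length w'. E (refls w' ! j) (refls w ! i)" if i: "i < length w" for i
    proof -
      let ?t = "refls w ! i"
      have "{j. j < length (refls w) \<and> E (refls w ! j) ?t} = {i}"
        using dist' i E_refl by auto
      then have "cnt w ?t = 1" unfolding cnt_def by (simp add: length_filter_conv_card)
      then have "odd (cnt w' ?t)" using cnt_inv[OF ww w, of ?t] by simp
      then have "cnt w' ?t \<noteq> 0" by (metis even_zero)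
      then obtain r where "r \<in> set (refls w')" "E r ?t" unfolding cnt_def
        by (metis filter_False length_0_conv)
      then show ?thesis by (metis in_set_conv_nth length_refls)
    qed
    define f where "f i = (SOME j. j < length w' \<and> E (refls w' ! j) (refls w ! i))" for i
    have f: "f i < length w' \<and> E (refls w' ! f i) (refls w ! i)" if "i < length w" for i
      using someI_ex[OF ex[OF that]] unfolding f_def by blast
    have "inj_on f {..<length w}"
    proof (rule inj_onI)
      fix i j assume "i \<in> {..<length w}" "j \<in> {..<length w}" "f i = f j"
      then show "i = j" using f[of i] f[of j] dist' by (metis E_sym E_trans lessThan_iff)
    qed
    moreover have "f ` {..<length w} \<subseteq> {..<length w'}" using f by auto
    ultimately show ?thesis using card_inj_on_le[of f "{..<length w}" "{..<length w'}"] by simp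
  qed
  then show ?thesis using w by (simp add: reduced_def)
qed

lemma exchange:
  assumes r: "reduced w" and s: "s \<in> S" and nr: "\<not> reduced (s # w)"
  shows "\<exists>y s' z. w = y @ s' # z \<and> E (s # y) (y @ [s'])"
proof -
  have "s # w \<in> lists S" using r s reduced_lists by auto
  then obtain x t y t' z where d: "s # w = x @ t # y @ t' # z" and e: "E (t # y) (y @ [t'])"
    using no_swap_reduced nr by blast
  show ?thesis
  proof (cases x)
    case Nil then show ?thesis using d e by auto
  next
    case (Cons a x')
    then have "w = x' @ t # y @ t' # z" using d by simp
    then show ?thesis using reduced_no_swap r e by blast
  qed
qed

lemma swap_E: "E (s # y) (y @ [s']) \<Longrightarrow> E (y @ s' # z) (s # y @ z)"
  using E_app[of "s # y" "y @ [s']" z z] E_sym by fastforce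

end

context cox begin

lemma swap_refl:
  assumes w: "x @ s # y @ s' # z \<in> lists S" and e: "E (s # y) (y @ [s'])"
  shows "E (refls (x @ s # y @ s' # z) ! length x)
              (refls (x @ s # y @ s' # z) ! (length x + 1 + length y))"
proof -
  have xS: "x \<in> lists S" and sS: "s \<in> S" and yS: "y \<in> lists S" and s'S: "s' \<in> S" using w by auto
  have r1: "refls (x @ s # y @ s' # z) ! length x = x @ [s] @ rev x"
    using refls_nth_len[of x s "y @ s' # z"] by simp
  have r2: "refls (x @ s # y @ s' # z) ! (length x + 1 + length y)
        = (x @ s # y) @ [s'] @ rev (x @ s # y)"
    using refls_nth_len[of "x @ s # y" s' z] by simp
  have "E ((s # y) @ [s'] @ rev y @ [s]) ((y @ [s']) @ [s'] @ rev y @ [s])"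
    using E_app[OF e E_refl] .
  moreover have "E (y @ [s', s'] @ rev y @ [s]) (y @ [] @ rev y @ [s])"
    using E_ctx[OF E_ss[OF s'S], of y "rev y @ [s]"] by simp
  moreover have "E ((y @ rev y) @ [s]) ([] @ [s])"
    using E_app[OF E_inv[OF yS] E_refl] .
  ultimately have "E (s # y @ [s'] @ rev y @ [s]) [s]" by (auto intro: E_trans)
  then have "E (x @ (s # y @ [s'] @ rev y @ [s]) @ rev x) (x @ [s] @ rev x)" using E_ctx by blast
  then show ?thesis using r1 r2 E_sym by simp
qed

lemma distinct_reduced:
  assumes w: "w \<in> lists S"
    and d: "\<And>i j. i < j \<Longrightarrow> j < length w \<Longrightarrow> \<not> E (refls w ! i) (refls w ! j)"
  shows "reduced w"
proof (rule no_swap_reduced[OF w])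
  fix x s y s' z assume wd: "w = x @ s # y @ s' # z"
  show "\<not> E (s # y) (y @ [s'])"
  proof
    assume "E (s # y) (y @ [s'])"
    then have "E (refls w ! length x) (refls w ! (length x + 1 + length y))"
      using swap_refl w wd by blast
    moreover have "length x < length x + 1 + length y" "length x + 1 + length y < length w"
      using wd by auto
    ultimately show False using d by blast
  qed
qed

lemma alt_reduced:
  assumes ab: "a \<in> S" "b \<in> S" "a \<noteq> b" and n: "enat n \<le> m a b"
  shows "reduced (alt n a b)"
proof (rule distinct_reduced)
  show "alt n a b \<in> lists S" using set_alt[of n a b] ab by auto
next
  fix i j assume ij: "i < j" "j < length (alt n a b)"
  have ri: "refls (alt n a b) ! i = alt (2*i+1) a b" and rj: "refls (alt n a b) ! j = alt (2*j+1) a b"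
    using ij by (auto simp: refls_alt)
  have "alt (2*j+1) a b = alt (2*(j-i)) a b @ alt (2*i+1) a b"
    using alt_add[of "2*(j-i)" "2*i+1" a b] ij by (simp add: algebra_simps)
  moreover have "alt (2*i+1) a b \<in> lists S" using set_alt[of "2*i+1" a b] ab by auto
  ultimately have c: "E (alt (2*i+1) a b) (alt (2*j+1) a b) \<Longrightarrow> E (alt (2*(j-i)) a b) []"
    using E_cancel_right[of "alt (2*i+1) a b" "alt (2*(j-i)) a b" "[]"] E_sym by auto
  have "enat (j - i) < m a b" using ij n by (metis diff_le_self enat_ord_simps(2) le_less_trans length_alt less_le_trans order.strict_trans2)
  then have "\<not> E (alt (2*(j-i)) a b) []" using dihedral[OF ab, of "j-i"] ij by simp
  then show "\<not> E (refls (alt n a b) ! i) (refls (alt n a b) ! j)" using c ri rj by auto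
qed

lemma braid_E:
  assumes ab: "a \<in> S" "b \<in> S" and n: "m a b = enat n"
  shows "E (alt n a b) (alt n b a)"
proof -
  have "alt (2*n) a b = alt n a b @ rev (alt n b a)"
    using alt_add[of n n a b] by (simp add: rev_alt mult_2)
  then have h: "E (alt n a b @ rev (alt n b a)) []" using E_alt[OF ab n] by simp
  have bS: "alt n b a \<in> lists S" using set_alt[of n b a] ab by auto
  have "E ((alt n a b @ rev (alt n b a)) @ alt n b a) ([] @ alt n b a)" using E_app[OF h E_refl] .
  moreover have "E (alt n a b @ (rev (alt n b a) @ alt n b a)) (alt n a b @ [])"
    using E_app[OF E_refl E_inv'[OF bS]] .
  ultimately show ?thesis by (metis E_sym E_trans append_assoc append_Nil append_Nil2)
qed

definition br :: "'g list \<Rightarrow> 'g list \<Rightarrow> bool" where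
  "br u v \<longleftrightarrow> (\<exists>a b n. a \<in> S \<and> b \<in> S \<and> a \<noteq> b \<and> m a b = enat n \<and> u = alt n a b \<and> v = alt n b a)"

abbreviation B where "B \<equiv> cong_cl br"

lemma not_reduced_desc:
  assumes "E w (s # u)" "reduced (s # u)" "E w x" "reduced x"
  shows "\<not> reduced (s # x)"
proof
  assume r: "reduced (s # x)"
  have sS: "s \<in> S" using reduced_lists[OF assms(2)] by simp
  have "E (s # x) (s # s # u)" using E_Cons assms(1,3) by (meson E_sym E_trans)
  moreover have "E (s # s # u) u" using E_ss_ctx[OF sS, of "[]" u] by simp
  ultimately have "E (s # x) u" using E_trans by blast
  moreover have "length x = length (s # u)" using reduced_len assms by (meson E_sym E_trans)
  ultimately show False using r unfolding reduced_def by fastforce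
qed

lemma step_desc:
  assumes w: "reduced w" and st: "s \<in> S" "t \<in> S" "s \<noteq> t"
    and su: "E w (s # u)" "reduced (s # u)"
    and jy: "E w (alt j t s @ y)" "reduced (alt j t s @ y)"
    and jm: "enat (Suc j) \<le> m s t"
  shows "\<exists>z. E w (alt (Suc j) s t @ z) \<and> reduced (alt (Suc j) s t @ z)"
proof -
  let ?x = "alt j t s @ y"
  have nr: "\<not> reduced (s # ?x)" using not_reduced_desc[OF su jy] .
  obtain y1 s' z1 where x: "?x = y1 @ s' # z1" and e: "E (s # y1) (y1 @ [s'])"
    using exchange[OF jy(2) st(1) nr] by blast
  have long: ?thesis if "alt j t s @ y1' = y1" "y = y1' @ s' # z1" for y1'
  proof -
    have "E ?x (s # y1 @ z1)" using swap_E[OF e] x by simp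
    then have "E w (alt (Suc j) s t @ (y1' @ z1))" using jy(1) that E_trans by fastforce
    moreover have "length (alt (Suc j) s t @ (y1' @ z1)) = length w"
      using reduced_len[OF w jy(2) jy(1)] that by auto
    ultimately show ?thesis using reduced_E[OF w] by blast
  qed
  have short: False if "alt j t s = y1 @ s' # r" for r
  proof -
    have "y1 @ s' # z1 \<in> lists S" using x reduced_lists[OF jy(2)] by simp
    then have sS': "s' \<in> S" by simp
    have "E ((s # y1) @ s' # r) ((y1 @ [s']) @ s' # r)" using E_app[OF e E_refl] .
    moreover have "E (y1 @ s' # s' # r) (y1 @ r)" using E_ss_ctx[OF sS'] .
    ultimately have "E (alt (Suc j) s t) (y1 @ r)" using that by (auto intro: E_trans)
    moreover have "reduced (alt (Suc j) s t)" using alt_reduced[OF st jm] .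
    moreover have "length (y1 @ r) < length (alt (Suc j) s t)"
      using that arg_cong[OF that, of length] by simp
    ultimately show False unfolding reduced_def by fastforce
  qed
  from x have "\<exists>us. alt j t s = y1 @ us \<and> us @ y = s' # z1 \<or> alt j t s @ us = y1 \<and> y = us @ s' # z1"
    by (simp add: append_eq_append_conv2)
  then obtain us where "alt j t s = y1 @ us \<and> us @ y = s' # z1 \<or> alt j t s @ us = y1 \<and> y = us @ s' # z1"
    by blast
  then show ?thesis
  proof
    assume h: "alt j t s = y1 @ us \<and> us @ y = s' # z1"
    show ?thesis
    proof (cases us)
      case Nil then show ?thesis using h long[of "[]"] by simp
    next
      case (Cons c r) then show ?thesis using h short[of r] by simp
    qed
  next
    assume "alt j t s @ us = y1 \<and> y = us @ s' # z1"
    then show ?thesis using long by blast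
  qed
qed

lemma two_desc:
  assumes w: "reduced w" and st: "s \<in> S" "t \<in> S" "s \<noteq> t"
    and su: "E w (s # u)" "reduced (s # u)"
    and tv: "E w (t # v)" "reduced (t # v)"
  shows "\<exists>n z. m s t = enat n \<and> E w (alt n s t @ z) \<and> reduced (alt n s t @ z)"
proof -
  have mts: "m t s = m s t" using m_sym st by simp
  have P: "1 \<le> j \<Longrightarrow> enat j \<le> m s t \<Longrightarrow>
    (\<exists>z. E w (alt j s t @ z) \<and> reduced (alt j s t @ z)) \<and>
    (\<exists>z. E w (alt j t s @ z) \<and> reduced (alt j t s @ z))" for j
  proof (induction j)
    case 0 then show ?case by simp
  next
    case (Suc j)
    note IHo = Suc.IH and pr = Suc.prems
    show ?case
    proof (cases j)
      case 0 then show ?thesis using su tv by auto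
    next
      case (Suc j')
      have jm: "enat j \<le> m s t" using pr by (meson Suc_n_not_le_n enat_ord_simps(1) nle_le order_trans)
      then have IH: "(\<exists>z. E w (alt j s t @ z) \<and> reduced (alt j s t @ z)) \<and>
          (\<exists>z. E w (alt j t s @ z) \<and> reduced (alt j t s @ z))" using IHo Suc by simp
      then obtain y1 y2 where y1: "E w (alt j s t @ y1)" "reduced (alt j s t @ y1)"
        and y2: "E w (alt j t s @ y2)" "reduced (alt j t s @ y2)" by blast
      show ?thesis
        using step_desc[OF w st su y2 pr(2)]
          step_desc[OF w st(2,1) st(3)[symmetric] tv y1] pr(2) mts by auto
    qed
  qed
  show ?thesis
  proof (cases "m s t")
    case (enat n)
    have "2 \<le> m s t" using m_ge2 st by simp
    then have "1 \<le> n" using enat by (simp add: one_enat_def numeral_eq_enat)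
    then show ?thesis using P[of n] enat by auto
  next
    case infinity
    then obtain z where "E w (alt (Suc (length w)) s t @ z)" "reduced (alt (Suc (length w)) s t @ z)"
      using P[of "Suc (length w)"] by auto
    then show ?thesis using reduced_len[OF w] by fastforce
  qed
qed

theorem matsumoto: "reduced u \<Longrightarrow> reduced v \<Longrightarrow> E u v \<Longrightarrow> B u v"
proof (induction "length u" arbitrary: u v rule: less_induct)
  case less
  show ?case
  proof (cases u)
    case Nil
    then have "v = []" using reduced_len[OF less.prems] by simp
    then show ?thesis using Nil by (simp add: cong_cl.refl)
  next
    case (Cons s u')
    then obtain t v' where v: "v = t # v'" using reduced_len[OF less.prems] by (cases v) auto
    have sS: "s \<in> S" using reduced_lists[OF less.prems(1)] Cons by simp
    have tS: "t \<in> S" using reduced_lists[OF less.prems(2)] v by simp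
    have ru': "reduced u'" using reduced_append[of "[s]" u'] less.prems Cons by simp
    have rv': "reduced v'" using reduced_append[of "[t]" v'] less.prems v by simp
    have lens: "length v' = length u'" using reduced_len[OF less.prems] Cons v by simp
    show ?thesis
    proof (cases "s = t")
      case True
      then have "E u' v'" using E_cancel_left[of "[s]" u' v'] less.prems(3) Cons v sS by simp
      then have "B u' v'" using less.hyps[OF _ ru' rv'] Cons by simp
      then show ?thesis using cong_cl_Cons[of br u' v' s] Cons v True by simp
    next
      case False
      obtain n z where n: "m s t = enat n" and ez: "E u (alt n s t @ z)" and rz: "reduced (alt n s t @ z)"
        using two_desc[OF less.prems(1) sS tS False, of u' v'] less.prems Cons v by auto
      have "2 \<le> m s t" using m_ge2 sS tS False by simp
      then obtain n' where n': "n = Suc n'" using n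
        by (cases n) (auto simp: numeral_eq_enat)
      have rz': "reduced (alt n' t s @ z)" using rz n' reduced_append[of "[s]" "alt n' t s @ z"] by simp
      have "E u' (alt n' t s @ z)" using E_cancel_left[of "[s]" u' "alt n' t s @ z"] ez Cons n' sS by simp
      then have B1: "B u (alt n s t @ z)" using less.hyps[OF _ ru' rz'] Cons n' cong_cl_Cons by fastforce
      have braid: "E (alt n s t @ z) (alt n t s @ z)" using E_app[OF braid_E[OF sS tS n] E_refl] .
      have rz2: "reduced (alt n t s @ z)" using reduced_E[OF rz braid] by simp
      have rz2': "reduced (alt n' s t @ z)" using rz2 n' reduced_append[of "[t]" "alt n' s t @ z"] by simp
      have "E v (alt n t s @ z)" using less.prems(3) ez braid by (meson E_sym E_trans)
      then have "E v' (alt n' s t @ z)" using E_cancel_left[of "[t]" v' "alt n' s t @ z"] v n' tS by simp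
      then have "B v' (alt n' s t @ z)" using less.hyps[OF _ rv' rz2'] Cons lens by simp
      then have B2: "B v (alt n t s @ z)" using v n' cong_cl_Cons by fastforce
      have "br (alt n s t) (alt n t s)" using sS tS False n unfolding br_def by blast
      then have B3: "B (alt n s t @ z) (alt n t s @ z)" using cong_cl.base[of br _ _ "[]" z] by simp
      show ?thesis using B1 B2 B3 by (meson cong_cl.sym cong_cl.trans)
    qed
  qed
qed

end

locale coxK = cox +
  fixes K
  assumes K_sub: "K \<subseteq> S"
    and even_nK: "a \<in> S - K \<Longrightarrow> b \<in> S \<Longrightarrow> a \<noteq> b \<Longrightarrow> m a b = enat n \<Longrightarrow> even n"
begin

definition qr :: "'a list \<Rightarrow> 'a list \<Rightarrow> bool" where
  "qr u v \<longleftrightarrow> br u v \<or> (\<exists>s\<in>K. u = [s, s] \<and> v = [])"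

abbreviation Q where "Q \<equiv> cong_cl qr"

definition simple :: "'a list \<Rightarrow> bool" where
  "simple w \<longleftrightarrow> (\<forall>a \<in> S - K. count_list w a \<le> 1)"

lemma br_count: "br u v \<Longrightarrow> c \<in> S - K \<Longrightarrow> count_list u c = count_list v c"
proof -
  assume "br u v" and c: "c \<in> S - K"
  then obtain a b n where ab: "a \<in> S" "b \<in> S" "a \<noteq> b" "m a b = enat n" and u: "u = alt n a b"
    and v: "v = alt n b a" unfolding br_def by blast
  show ?thesis
  proof (cases "c = a")
    case True
    then have "even n" using even_nK[of a b n] ab c by blast
    then show ?thesis using u v True count_alt_a[OF ab(3), of n] count_alt_b[of b a n] ab(3)
      by (auto elim!: evenE)
  next
    case ca: False
    show ?thesis
    proof (cases "c = b")
      case True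
      have "m b a = enat n" using m_sym ab by metis
      then have "even n" using even_nK[of b a n] ab c True by blast
      then show ?thesis using u v True count_alt_a[of b a n] count_alt_b[OF ab(3), of n] ab(3)
        by (auto elim!: evenE)
    next
      case False
      then show ?thesis using u v ca count_alt_other by metis
    qed
  qed
qed

lemma B_count: "B u v \<Longrightarrow> c \<in> S - K \<Longrightarrow> count_list u c = count_list v c"
proof (induction rule: cong_cl.induct)
  case (base u v xs ys) then show ?case using br_count by simp
qed auto

lemma B_Q: "B u v \<Longrightarrow> Q u v"
  by (erule cong_cl_mono) (simp add: qr_def cong_cl_base1)

lemma split_nonreduced: "u \<in> lists S \<Longrightarrow> \<not> reduced u \<Longrightarrow>
   \<exists>r s p. u = r @ s # p \<and> reduced p \<and> \<not> reduced (s # p)"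
proof (induction u)
  case Nil then show ?case by simp
next
  case (Cons c u')
  show ?case
  proof (cases "reduced u'")
    case True then show ?thesis using Cons.prems by (metis append_Nil)
  next
    case False
    then obtain r s p where "u' = r @ s # p" "reduced p" "\<not> reduced (s # p)" using Cons by auto
    then show ?thesis by (metis append_Cons)
  qed
qed

lemma reduce: "u \<in> lists S \<Longrightarrow> simple u \<Longrightarrow> \<exists>u'. reduced u' \<and> E u u' \<and> Q u u'"
proof (induction "length u" arbitrary: u rule: less_induct)
  case less
  show ?case
  proof (cases "reduced u")
    case True then show ?thesis by (auto intro: cong_cl.refl)
  next
    case False
    then obtain r s p where u: "u = r @ s # p" and rp: "reduced p" and nr: "\<not> reduced (s # p)"
      using split_nonreduced less.prems by blast
    have sS: "s \<in> S" using less.prems u by simp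
    obtain y s' z where p: "p = y @ s' # z" and e: "E (s # y) (y @ [s'])"
      using exchange[OF rp sS nr] by blast
    have ep: "E p (s # y @ z)" using swap_E[OF e] p by simp
    have rp2: "reduced (s # y @ z)" using reduced_E[OF rp ep] p by simp
    have Bp: "B p (s # y @ z)" using matsumoto[OF rp rp2 ep] .
    show ?thesis
    proof (cases "s \<in> K")
      case False
      then have "s \<in> S - K" using sS by simp
      then have "count_list p s = count_list (s # y @ z) s" using B_count[OF Bp] by blast
      then have "count_list u s \<ge> 2" using u by simp
      moreover have "count_list u s \<le> 1" using less.prems(2) \<open>s \<in> S - K\<close> unfolding simple_def by blast
      ultimately show ?thesis by simp
    next
      case True
      let ?v = "r @ y @ z"
      have Q1: "Q u (r @ s # s # y @ z)" using B_Q[OF Bp] cong_cl_ctx[of qr p "s # y @ z" "r @ [s]" "[]"] u by simp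
      have "qr [s, s] []" using True by (simp add: qr_def)
      then have Q2: "Q (r @ s # s # y @ z) ?v" using cong_cl.base[of qr "[s,s]" "[]" r "y @ z"] by simp
      have E1: "E u (r @ s # s # y @ z)" using E_ctx[OF ep, of "r @ [s]" "[]"] u by simp
      have E2: "E (r @ s # s # y @ z) ?v" using E_ss_ctx[OF sS] .
      have vS: "?v \<in> lists S" using less.prems u p by simp
      have vs: "simple ?v" using less.prems(2) u p unfolding simple_def
        by (auto intro: order_trans[rotated])
      obtain v' where "reduced v'" "E ?v v'" "Q ?v v'"
        using less.hyps[OF _ vS vs] u p by auto
      then show ?thesis using Q1 Q2 E1 E2 by (meson cong_cl.trans)
    qed
  qed
qed

theorem tits: "u \<in> lists S \<Longrightarrow> v \<in> lists S \<Longrightarrow> simple u \<Longrightarrow> simple v \<Longrightarrow> E u v \<Longrightarrow> Q u v"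
proof -
  assume uv: "u \<in> lists S" "v \<in> lists S" "simple u" "simple v" "E u v"
  obtain u' where u': "reduced u'" "E u u'" "Q u u'" using reduce uv by blast
  obtain v' where v': "reduced v'" "E v v'" "Q v v'" using reduce uv by blast
  have "E u' v'" using u' v' uv by (meson E_sym E_trans)
  then have "Q u' v'" using B_Q matsumoto u' v' by blast
  then show "Q u v" using u' v' by (meson cong_cl.sym cong_cl.trans)
qed

end

fun step4 :: "complex \<Rightarrow> complex \<Rightarrow> complex \<Rightarrow> complex \<Rightarrow> complex \<times> complex \<Rightarrow> complex \<times> complex" where
  "step4 p q X Y (U, W) = (let W1 = - Y - q * U - W in (- X - U - p * W1, W1))"

fun stepA :: "int \<Rightarrow> int \<Rightarrow> int \<times> int \<Rightarrow> int \<times> int" where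
  "stepA p q (x, y) = ((p*q - 1) * x + p * y, - q * x - y)"

definition mo :: "int \<Rightarrow> enat" where
  "mo n = (if n = 0 then 2 else if n = 1 then 3 else if n = 2 then 4 else if n = 3 then 6 else \<infinity>)"

locale rpair0 =
  fixes sc :: "complex \<Rightarrow> 'v::ab_group_add \<Rightarrow> 'v"
    and ci cj :: "'v \<Rightarrow> complex" and ai aj :: 'v and p q :: int
  assumes sc_add: "sc a (x + y) = sc a x + sc a y"
    and sc_ladd: "sc (a + b) x = sc a x + sc b x"
    and sc_sc: "sc a (sc b x) = sc (a * b) x"
    and sc_one: "sc 1 x = x"
    and ci_add: "ci (x + y) = ci x + ci y" and ci_sc: "ci (sc a x) = a * ci x"
    and cj_add: "cj (x + y) = cj x + cj y" and cj_sc: "cj (sc a x) = a * cj x"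
    and cii: "ci ai = 2" and cjj: "cj aj = 2" and cij: "ci aj = of_int p" and cji: "cj ai = of_int q"
begin

definition Ri where "Ri x = x - sc (ci x) ai"
definition Rj where "Rj x = x - sc (cj x) aj"
definition T where "T = Ri \<circ> Rj"

lemma sc_zero: "sc 0 x = 0" using sc_ladd[of 0 0 x] by simp
lemma sc_ldiff: "sc (a - b) x = sc a x - sc b x"
  using sc_ladd[of "a - b" b x] by (simp add: algebra_simps)

lemma ci_ex: "ci (\<mu> + sc U ai + sc W aj) = ci \<mu> + 2 * U + of_int p * W"
  by (simp add: ci_add ci_sc cii cij)
lemma cj_ex: "cj (\<mu> + sc U ai + sc W aj) = cj \<mu> + of_int q * U + 2 * W"
  by (simp add: cj_add cj_sc cjj cji)

lemma T_ex: "T (\<mu> + sc U ai + sc W aj) = \<mu> + sc (fst (step4 p q (ci \<mu>) (cj \<mu>) (U, W))) ai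
    + sc (snd (step4 p q (ci \<mu>) (cj \<mu>) (U, W))) aj"
proof -
  let ?W1 = "- cj \<mu> - of_int q * U - W"
  have "Rj (\<mu> + sc U ai + sc W aj) = \<mu> + sc U ai + sc ?W1 aj"
  proof -
    have "Rj (\<mu> + sc U ai + sc W aj) = \<mu> + sc U ai + (sc W aj - sc (cj \<mu> + of_int q * U + 2 * W) aj)"
      unfolding Rj_def cj_ex by (simp add: algebra_simps)
    also have "sc W aj - sc (cj \<mu> + of_int q * U + 2 * W) aj = sc (W - (cj \<mu> + of_int q * U + 2 * W)) aj"
      by (rule sc_ldiff[symmetric])
    also have "W - (cj \<mu> + of_int q * U + 2 * W) = ?W1" by (simp add: algebra_simps)
    finally show ?thesis .
  qed
  moreover have "Ri (\<mu> + sc U ai + sc ?W1 aj) = \<mu> + sc (- ci \<mu> - U - of_int p * ?W1) ai + sc ?W1 aj"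
  proof -
    have "Ri (\<mu> + sc U ai + sc ?W1 aj) = \<mu> + (sc U ai - sc (ci \<mu> + 2 * U + of_int p * ?W1) ai) + sc ?W1 aj"
      unfolding Ri_def ci_ex by (simp add: algebra_simps)
    also have "sc U ai - sc (ci \<mu> + 2 * U + of_int p * ?W1) ai = sc (U - (ci \<mu> + 2 * U + of_int p * ?W1)) ai"
      by (rule sc_ldiff[symmetric])
    also have "U - (ci \<mu> + 2 * U + of_int p * ?W1) = - ci \<mu> - U - of_int p * ?W1" by (simp add: algebra_simps)
    finally show ?thesis .
  qed
  ultimately show ?thesis by (simp add: T_def Let_def)
qed

lemma T_pow: "(T ^^ n) (\<mu> + sc U ai + sc W aj) = \<mu> + sc (fst ((step4 p q (ci \<mu>) (cj \<mu>) ^^ n) (U, W))) ai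
    + sc (snd ((step4 p q (ci \<mu>) (cj \<mu>) ^^ n) (U, W))) aj"
proof (induction n)
  case 0 then show ?case by simp
next
  case (Suc n)
  obtain U' W' where uw: "(step4 p q (ci \<mu>) (cj \<mu>) ^^ n) (U, W) = (U', W')" by fastforce
  have "(T ^^ Suc n) (\<mu> + sc U ai + sc W aj) = T ((T ^^ n) (\<mu> + sc U ai + sc W aj))" by simp
  also have "\<dots> = T (\<mu> + sc U' ai + sc W' aj)" using Suc uw by simp
  also have "\<dots> = \<mu> + sc (fst (step4 p q (ci \<mu>) (cj \<mu>) (U', W'))) ai
    + sc (snd (step4 p q (ci \<mu>) (cj \<mu>) (U', W'))) aj" by (rule T_ex)
  finally show ?case using uw by simp
qed

lemma T_pow0: "(T ^^ n) \<mu> = \<mu> + sc (fst ((step4 p q (ci \<mu>) (cj \<mu>) ^^ n) (0, 0))) ai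
    + sc (snd ((step4 p q (ci \<mu>) (cj \<mu>) ^^ n) (0, 0))) aj"
  using T_pow[of n \<mu> 0 0] by (simp add: sc_zero)

lemma T_pow_id: "(\<And>X Y. (step4 p q X Y ^^ n) (0, 0) = (0, 0)) \<Longrightarrow> T ^^ n = id"
  using T_pow0 by (simp add: fun_eq_iff sc_zero)

lemma step4_A: "(step4 p q 0 0 ^^ n) (of_int x, of_int y) =
   (of_int (fst ((stepA p q ^^ n) (x, y))), of_int (snd ((stepA p q ^^ n) (x, y))))"
proof (induction n)
  case 0 then show ?case by simp
next
  case (Suc n)
  obtain a b where ab: "(stepA p q ^^ n) (x, y) = (a, b)" by fastforce
  show ?case using Suc ab by (simp add: Let_def algebra_simps)
qed

lemma T_pow_ai: "(T ^^ n) ai = sc (of_int (fst ((stepA p q ^^ n) (1, 0)))) ai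
    + sc (of_int (snd ((stepA p q ^^ n) (1, 0)))) aj"
proof -
  have "(T ^^ n) (0 + sc 1 ai + sc 0 aj) = 0 + sc (fst ((step4 p q (ci 0) (cj 0) ^^ n) (1, 0))) ai
    + sc (snd ((step4 p q (ci 0) (cj 0) ^^ n) (1, 0))) aj" using T_pow[of n 0 1 0] by simp
  moreover have "ci 0 = 0" "cj 0 = 0" using ci_sc[of 0 0] cj_sc[of 0 0] sc_zero by auto
  moreover have "(step4 p q 0 0 ^^ n) (1, 0) = (of_int (fst ((stepA p q ^^ n) (1, 0))), of_int (snd ((stepA p q ^^ n) (1, 0))))"
    using step4_A[of n 1 0] by simp
  ultimately show ?thesis by (simp add: sc_one sc_zero)
qed

end

locale rpair = rpair0 +
  assumes indep: "sc c1 ai + sc c2 aj = 0 \<Longrightarrow> c1 = 0 \<and> c2 = 0"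
begin

lemma T_pow_ai_ne: "(stepA p q ^^ n) (1, 0) \<noteq> (1, 0) \<Longrightarrow> (T ^^ n) \<noteq> id"
proof
  assume ne: "(stepA p q ^^ n) (1, 0) \<noteq> (1, 0)" and id: "T ^^ n = id"
  obtain x y where xy: "(stepA p q ^^ n) (1, 0) = (x, y)" by fastforce
  have "sc (of_int x) ai + sc (of_int y) aj = ai" using T_pow_ai[of n] id xy by simp
  then have "sc (of_int x - 1) ai + sc (of_int y) aj = 0"
    by (simp add: sc_ldiff sc_one algebra_simps)
  then have "of_int x - (1::complex) = 0" "(of_int y :: complex) = 0" using indep by blast+
  then have "x = 1" "y = 0" by simp_all
  then show False using ne xy by simp
qed

end

lemma s4_00: "(step4 0 0 X Y ^^ 2) (0, 0) = (0, 0)"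
  by (simp add: numeral_eq_Suc Let_def algebra_simps)
lemma s4_11: "(step4 (-1) (-1) X Y ^^ 3) (0, 0) = (0, 0)"
  by (simp add: numeral_eq_Suc Let_def algebra_simps)
lemma s4_12: "(step4 (-1) (-2) X Y ^^ 4) (0, 0) = (0, 0)"
  by (simp add: numeral_eq_Suc Let_def algebra_simps)
lemma s4_21: "(step4 (-2) (-1) X Y ^^ 4) (0, 0) = (0, 0)"
  by (simp add: numeral_eq_Suc Let_def algebra_simps)
lemma s4_13: "(step4 (-1) (-3) X Y ^^ 6) (0, 0) = (0, 0)"
  by (simp add: numeral_eq_Suc Let_def algebra_simps)
lemma s4_31: "(step4 (-3) (-1) X Y ^^ 6) (0, 0) = (0, 0)"
  by (simp add: numeral_eq_Suc Let_def algebra_simps)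

lemma sA_00: "0 < d \<Longrightarrow> d < 2 \<Longrightarrow> (stepA 0 0 ^^ d) (1, 0) \<noteq> (1, 0)"
  by (auto simp: less_Suc_eq numeral_eq_Suc)
lemma sA_11: "0 < d \<Longrightarrow> d < 3 \<Longrightarrow> (stepA (-1) (-1) ^^ d) (1, 0) \<noteq> (1, 0)"
  by (auto simp: less_Suc_eq numeral_eq_Suc)
lemma sA_12: "0 < d \<Longrightarrow> d < 4 \<Longrightarrow> (stepA (-1) (-2) ^^ d) (1, 0) \<noteq> (1, 0)"
  by (auto simp: less_Suc_eq numeral_eq_Suc)
lemma sA_21: "0 < d \<Longrightarrow> d < 4 \<Longrightarrow> (stepA (-2) (-1) ^^ d) (1, 0) \<noteq> (1, 0)"
  by (auto simp: less_Suc_eq numeral_eq_Suc)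
lemma sA_13: "0 < d \<Longrightarrow> d < 6 \<Longrightarrow> (stepA (-1) (-3) ^^ d) (1, 0) \<noteq> (1, 0)"
  by (auto simp: less_Suc_eq numeral_eq_Suc)
lemma sA_31: "0 < d \<Longrightarrow> d < 6 \<Longrightarrow> (stepA (-3) (-1) ^^ d) (1, 0) \<noteq> (1, 0)"
  by (auto simp: less_Suc_eq numeral_eq_Suc)

lemma sA_rec: "fst (stepA p q (stepA p q v)) = (p*q - 2) * fst (stepA p q v) - fst v"
  by (cases v) (simp add: algebra_simps)

lemma sA_grow:
  assumes "4 \<le> p * q"
  shows "1 \<le> fst ((stepA p q ^^ d) (1, 0)) \<and> fst ((stepA p q ^^ d) (1, 0)) < fst ((stepA p q ^^ Suc d) (1, 0))"
proof (induction d)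
  case 0 then show ?case using assms by simp
next
  case (Suc d)
  let ?x = "\<lambda>n. fst ((stepA p q ^^ n) (1, 0))"
  have r: "?x (Suc (Suc d)) = (p*q - 2) * ?x (Suc d) - ?x d"
    using sA_rec[of p q "(stepA p q ^^ d) (1, 0)"] by simp
  have "2 * ?x (Suc d) \<le> (p*q - 2) * ?x (Suc d)"
    using Suc assms by (intro mult_right_mono) auto
  then have "1 \<le> ?x (Suc d)" "?x (Suc d) < ?x (Suc (Suc d))" using Suc.IH r by linarith+
  then show ?case by blast
qed

lemma sA_ne: "4 \<le> p * q \<Longrightarrow> 0 < d \<Longrightarrow> (stepA p q ^^ d) (1, 0) \<noteq> (1, 0)"
proof -
  assume a: "4 \<le> p * q" "0 < d"
  then obtain d' where d: "d = Suc d'" by (cases d) auto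
  have "1 < fst ((stepA p q ^^ d) (1, 0))" using sA_grow[OF a(1), of d'] d by simp
  then show ?thesis by auto
qed

lemma pq_cases: "(p::int) \<le> -1 \<Longrightarrow> q \<le> -1 \<Longrightarrow> p * q \<le> 3 \<Longrightarrow>
   (p = -1 \<and> q = -1) \<or> (p = -1 \<and> q = -2) \<or> (p = -2 \<and> q = -1) \<or> (p = -1 \<and> q = -3)
   \<or> (p = -3 \<and> q = -1) \<or> (p = -1 \<and> q = -1)"
proof -
  assume a: "p \<le> -1" "q \<le> -1" "p * q \<le> 3"
  have "0 \<le> p * (q + 1)" using a by (intro mult_nonpos_nonpos) auto
  then have h1: "- p \<le> p * q" by (simp add: algebra_simps)
  have "0 \<le> (p + 1) * q" using a by (intro mult_nonpos_nonpos) auto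
  then have h2: "- q \<le> p * q" by (simp add: algebra_simps)
  have "p = -1 \<or> p = -2 \<or> p = -3" using a h1 by linarith
  moreover have "q = -1 \<or> q = -2 \<or> q = -3" using a h2 by linarith
  ultimately show ?thesis using a by auto
qed

context rpair begin

theorem map_order_T:
  assumes pq: "p \<le> 0" "q \<le> 0" "p = 0 \<longleftrightarrow> q = 0"
  shows "map_order T = mo (p * q)"
proof -
  have fin: "map_order T = enat k"
    if k: "0 < k" "\<And>X Y. (step4 p q X Y ^^ k) (0, 0) = (0, 0)"
      "\<And>d. 0 < d \<Longrightarrow> d < k \<Longrightarrow> (stepA p q ^^ d) (1, 0) \<noteq> (1, 0)" for k
  proof -
    have Tk: "T ^^ k = id" using T_pow_id k(2) by blast
    have "(LEAST m. m > 0 \<and> (T ^^ m) = id) = k"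
    proof (rule Least_equality)
      show "0 < k \<and> T ^^ k = id" using Tk k by simp
      fix d assume "0 < d \<and> T ^^ d = id"
      then show "k \<le> d" using k(3)[of d] T_pow_ai_ne[of d] by (meson not_le)
    qed
    then show ?thesis unfolding map_order_def using Tk k(1) by auto
  qed
  show ?thesis
  proof (cases "p * q \<ge> 4")
    case True
    then have "\<not> (\<exists>m>0. (T ^^ m) = id)" using sA_ne T_pow_ai_ne by blast
    then have "map_order T = \<infinity>" unfolding map_order_def by simp
    moreover have "mo (p*q) = \<infinity>" unfolding mo_def using True by auto
    ultimately show ?thesis by simp
  next
    case False
    show ?thesis
    proof (cases "p = 0")
      case True
      then have "q = 0" using pq by simp
      then show ?thesis using fin[of 2] True s4_00 sA_00 by (simp add: mo_def numeral_eq_enat)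
    next
      case False
      then have "p \<le> -1" "q \<le> -1" using pq by auto
      then have c: "(p = -1 \<and> q = -1) \<or> (p = -1 \<and> q = -2) \<or> (p = -2 \<and> q = -1) \<or> (p = -1 \<and> q = -3)
        \<or> (p = -3 \<and> q = -1) \<or> (p = -1 \<and> q = -1)"
        using pq_cases[of p q] \<open>\<not> 4 \<le> p * q\<close> by linarith
      have f3: "map_order T = enat 3" if "p = -1" "q = -1"
        using fin[of 3] s4_11 sA_11 that by simp
      have f4: "map_order T = enat 4" if "(p = -1 \<and> q = -2) \<or> (p = -2 \<and> q = -1)"
        using fin[of 4] s4_12 sA_12 s4_21 sA_21 that by auto
      have f6: "map_order T = enat 6" if "(p = -1 \<and> q = -3) \<or> (p = -3 \<and> q = -1)"
        using fin[of 6] s4_13 sA_13 s4_31 sA_31 that by auto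
      show ?thesis using c f3 f4 f6 by (elim disjE) (simp_all add: mo_def numeral_eq_enat)
    qed
  qed
qed

end

locale setting =
  fixes A :: "'i \<Rightarrow> 'i \<Rightarrow> int"
    and scale :: "complex \<Rightarrow> 'v::ab_group_add \<Rightarrow> 'v"
    and alpha :: "'i \<Rightarrow> 'v"
    and coroot :: "'i \<Rightarrow> 'v \<Rightarrow> complex"
  assumes bc: "borcherds_cartan A"
    and vs: "vector_space scale"
    and lin: "\<forall>i. Vector_Spaces.linear scale (*) (coroot i)"
    and ca: "\<forall>i j. coroot i (alpha j) = of_int (A i j)"
    and injal: "inj alpha"
    and ind: "\<not> module.dependent scale (range alpha)"
begin

abbreviation ord where "ord \<equiv> rr_order scale alpha coroot"

lemma sc_add: "scale a (x + y) = scale a x + scale a y"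
  and sc_ladd: "scale (a + b) x = scale a x + scale b x"
  and sc_sc: "scale a (scale b x) = scale (a * b) x"
  and sc_one: "scale 1 x = x"
  using vs unfolding vector_space_def by auto

lemma cr_add: "coroot i (x + y) = coroot i x + coroot i y"
  and cr_sc: "coroot i (scale a x) = a * coroot i x"
  using lin unfolding Vector_Spaces.linear_def module_hom_def module_hom_axioms_def by auto

lemma A_off: "i \<noteq> j \<Longrightarrow> A i j \<le> 0" using bc unfolding borcherds_cartan_def by auto
lemma A_zero: "A i j = 0 \<longleftrightarrow> A j i = 0" using bc unfolding borcherds_cartan_def by auto
lemma A_diag: "A i i = 2 \<or> A i i \<le> 0" using bc unfolding borcherds_cartan_def by auto

lemma indep2:
  assumes ij: "i \<noteq> j" and h: "scale c1 (alpha i) + scale c2 (alpha j) = 0"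
  shows "c1 = 0 \<and> c2 = 0"
proof -
  have ne: "alpha i \<noteq> alpha j" using injal ij by (meson injD)
  let ?u = "\<lambda>v. if v = alpha i then c1 else c2"
  have s0: "(\<Sum>v\<in>{alpha i, alpha j}. scale (?u v) v) = 0" using ne h by simp
  have fs: "finite {alpha i, alpha j}" and sub: "{alpha i, alpha j} \<subseteq> range alpha" by auto
  have all: "\<forall>S\<subseteq>range alpha. finite S \<longrightarrow> (\<forall>u. (\<Sum>v\<in>S. scale (u v) v) = 0 \<longrightarrow> (\<forall>v\<in>S. u v = 0))"
    using ind vector_space.independent_explicit_finite_subsets[OF vs] by simp
  have "\<forall>v\<in>{alpha i, alpha j}. ?u v = 0" using all[rule_format, OF sub fs s0] by blast
  then show ?thesis using ne by auto
qed

lemma pair: "i \<noteq> j \<Longrightarrow> A i i = 2 \<Longrightarrow> A j j = 2 \<Longrightarrow>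
  rpair scale (coroot i) (coroot j) (alpha i) (alpha j) (A i j) (A j i)"
  unfolding rpair_def rpair0_def rpair_axioms_def
  using sc_add sc_ladd sc_sc sc_one cr_add cr_sc ca indep2 by auto

lemma ord_real: "i \<noteq> j \<Longrightarrow> A i i = 2 \<Longrightarrow> A j j = 2 \<Longrightarrow> ord i j = mo (A i j * A j i)"
proof -
  assume a: "i \<noteq> j" "A i i = 2" "A j j = 2"
  interpret rpair scale "coroot i" "coroot j" "alpha i" "alpha j" "A i j" "A j i"
    using pair[OF a] .
  have "T = srefl scale alpha coroot i \<circ> srefl scale alpha coroot j"
    unfolding T_def Ri_def Rj_def srefl_def by (simp add: fun_eq_iff)
  then have "ord i j = map_order T" unfolding rr_order_def by simp
  also have "\<dots> = mo (A i j * A j i)"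
    using map_order_T A_off A_zero a by simp
  finally show ?thesis .
qed

lemma ord_sym: "i \<noteq> j \<Longrightarrow> A i i = 2 \<Longrightarrow> A j j = 2 \<Longrightarrow> ord i j = ord j i"
  using ord_real by (metis mult.commute)

lemma ord_fin: "i \<noteq> j \<Longrightarrow> A i i = 2 \<Longrightarrow> A j j = 2 \<Longrightarrow> ord i j = enat k \<Longrightarrow> k \<in> {2,3,4,6}"
  using ord_real[of i j] unfolding mo_def
  by (auto split: if_splits simp: numeral_eq_enat)

lemma ord_ge2: "i \<noteq> j \<Longrightarrow> A i i = 2 \<Longrightarrow> A j j = 2 \<Longrightarrow> 2 \<le> ord i j"
  using ord_real[of i j] unfolding mo_def
  by (auto split: if_splits simp: numeral_eq_enat)

lemma ord_fin_pq: "i \<noteq> j \<Longrightarrow> A i i = 2 \<Longrightarrow> A j j = 2 \<Longrightarrow> ord i j = enat k \<Longrightarrow>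
   (A i j = 0 \<and> A j i = 0 \<and> k = 2) \<or> (A i j * A j i = 1 \<and> k = 3) \<or> (A i j * A j i = 2 \<and> k = 4)
   \<or> (A i j * A j i = 3 \<and> k = 6)"
  using ord_real[of i j] A_zero[of i j] unfolding mo_def
  by (auto split: if_splits simp: numeral_eq_enat)

end

definition whom :: "('g \<Rightarrow> 'x \<Rightarrow> 'x) \<Rightarrow> 'g list \<Rightarrow> 'x \<Rightarrow> 'x" where
  "whom g w = foldr (\<lambda>a f. g a \<circ> f) w id"

lemma whom_Nil[simp]: "whom g [] = id" by (simp add: whom_def)
lemma whom_Cons[simp]: "whom g (a # w) = g a \<circ> whom g w" by (simp add: whom_def)
lemma whom_append: "whom g (u @ v) = whom g u \<circ> whom g v"
  by (induction u) auto

lemma whom_alt: "whom g (alt (2*d) a b) = (g a \<circ> g b) ^^ d"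
proof (induction d)
  case 0 then show ?case by simp
next
  case (Suc d)
  have "alt (2 * Suc d) a b = a # b # alt (2*d) a b" by (simp add: numeral_eq_Suc)
  then show ?case using Suc by (simp add: comp_assoc)
qed

lemma whom_cong: "cong_cl R u v \<Longrightarrow> (\<And>u v. R u v \<Longrightarrow> whom g u = whom g v) \<Longrightarrow> whom g u = whom g v"
proof (induction rule: cong_cl.induct)
  case (base u v xs ys) then show ?case by (simp add: whom_append)
qed auto

lemma whom_crel: "cong_cl (crel S m) u v \<Longrightarrow>
   (\<And>a b k. a \<in> S \<Longrightarrow> b \<in> S \<Longrightarrow> m a b = enat k \<Longrightarrow> (g a \<circ> g b) ^^ k = id) \<Longrightarrow> whom g u = whom g v"
  by (erule whom_cong) (auto simp: crel_def concat_replicate_alt whom_alt)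

context setting begin

lemma tI_real: "a \<in> tilde_I A \<Longrightarrow> A (fst a) (fst a) = 2 \<Longrightarrow> snd a = 1"
  unfolding tilde_I_def by auto

lemma cox_cases:
  assumes ab: "a \<in> tilde_I A" "b \<in> tilde_I A" "a \<noteq> b" and k: "cox_mat A ord a b = enat k"
  shows "(A (fst a) (fst a) = 2 \<and> A (fst b) (fst b) = 2 \<and> fst a \<noteq> fst b \<and> ord (fst a) (fst b) = enat k)
     \<or> (\<not> (A (fst a) (fst a) = 2 \<and> A (fst b) (fst b) = 2) \<and> k = 2 \<and> A (fst a) (fst b) = 0 \<and> A (fst b) (fst a) = 0)"
proof (cases "A (fst a) (fst a) = 2 \<and> A (fst b) (fst b) = 2")
  case True
  then have "fst a \<noteq> fst b" using tI_real ab by (metis prod.expand)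
  then show ?thesis using True k ab(3) unfolding cox_mat_def by simp
next
  case False
  then show ?thesis using k ab(3) A_zero unfolding cox_mat_def
    by (auto split: if_splits simp: numeral_eq_enat)
qed

lemma cox_inf:
  assumes "a \<noteq> b" "\<not> (A (fst a) (fst a) = 2 \<and> A (fst b) (fst b) = 2)" "A (fst a) (fst b) \<noteq> 0"
  shows "cox_mat A ord a b = \<infinity>"
  using assms A_zero unfolding cox_mat_def by auto

lemma cox_sym: "a \<in> tilde_I A \<Longrightarrow> b \<in> tilde_I A \<Longrightarrow> cox_mat A ord a b = cox_mat A ord b a"
proof -
  assume ab: "a \<in> tilde_I A" "b \<in> tilde_I A"
  show ?thesis
  proof (cases "a = b")
    case True then show ?thesis by simp
  next
    case False
    show ?thesis
    proof (cases "A (fst a) (fst a) = 2 \<and> A (fst b) (fst b) = 2")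
      case True
      then have "fst a \<noteq> fst b" using tI_real ab False by (metis prod.expand)
      then show ?thesis using True False ord_sym unfolding cox_mat_def by auto
    next
      case nr: False
      then show ?thesis using False A_zero unfolding cox_mat_def by auto
    qed
  qed
qed

lemma cox_ge2: "a \<in> tilde_I A \<Longrightarrow> b \<in> tilde_I A \<Longrightarrow> a \<noteq> b \<Longrightarrow> 2 \<le> cox_mat A ord a b"
proof -
  assume ab: "a \<in> tilde_I A" "b \<in> tilde_I A" "a \<noteq> b"
  show ?thesis
  proof (cases "A (fst a) (fst a) = 2 \<and> A (fst b) (fst b) = 2")
    case True
    then have "fst a \<noteq> fst b" using tI_real ab by (metis prod.expand)
    then show ?thesis using True ab ord_ge2 unfolding cox_mat_def by auto
  next
    case False
    then show ?thesis using ab unfolding cox_mat_def by auto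
  qed
qed

definition rho :: "'i \<times> nat \<Rightarrow> 'v \<Rightarrow> 'v" where
  "rho a = (if A (fst a) (fst a) = 2 then srefl scale alpha coroot (fst a) else id)"

lemma srefl_inv: "A i i = 2 \<Longrightarrow> srefl scale alpha coroot i \<circ> srefl scale alpha coroot i = id"
proof (rule ext)
  fix x assume a: "A i i = 2"
  let ?c = "coroot i x"
  have cd: "coroot i (x - scale ?c (alpha i)) = - ?c"
  proof -
    have "coroot i x = coroot i (x - scale ?c (alpha i)) + coroot i (scale ?c (alpha i))"
      using cr_add[of i "x - scale ?c (alpha i)" "scale ?c (alpha i)"] by simp
    then have eq: "?c = coroot i (x - scale ?c (alpha i)) + ?c * 2" using cr_sc ca a by simp
    then show ?thesis by (simp add: add_eq_0_iff)
  qed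
  have "scale (- ?c) (alpha i) = - scale ?c (alpha i)"
    using sc_ladd[of "?c" "- ?c" "alpha i"] sc_ladd[of 0 0 "alpha i"] by (simp add: eq_neg_iff_add_eq_0 add.commute)
  then show "(srefl scale alpha coroot i \<circ> srefl scale alpha coroot i) x = id x"
    unfolding srefl_def comp_def using cd by simp
qed

lemma rho_inv: "rho a \<circ> rho a = id"
  unfolding rho_def using srefl_inv by auto

lemma rho_rel: "a \<in> tilde_I A \<Longrightarrow> b \<in> tilde_I A \<Longrightarrow> cox_mat A ord a b = enat k \<Longrightarrow> (rho a \<circ> rho b) ^^ k = id"
proof -
  assume ab: "a \<in> tilde_I A" "b \<in> tilde_I A" and k: "cox_mat A ord a b = enat k"
  show ?thesis
  proof (cases "a = b")
    case True then show ?thesis using k rho_inv by (simp add: one_enat_def)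
  next
    case False
    from cox_cases[OF ab False k] show ?thesis
    proof
      assume h: "A (fst a) (fst a) = 2 \<and> A (fst b) (fst b) = 2 \<and> fst a \<noteq> fst b \<and> ord (fst a) (fst b) = enat k"
      let ?T = "srefl scale alpha coroot (fst a) \<circ> srefl scale alpha coroot (fst b)"
      have ex: "\<exists>m>0. (?T ^^ m) = id" and kk: "k = (LEAST m. m > 0 \<and> (?T ^^ m) = id)"
        using h unfolding rr_order_def map_order_def by (auto split: if_splits)
      have "(?T ^^ k) = id" using LeastI_ex[OF ex] kk by simp
      then show ?thesis using h by (simp add: rho_def)
    next
      assume h: "\<not> (A (fst a) (fst a) = 2 \<and> A (fst b) (fst b) = 2) \<and> k = 2 \<and> A (fst a) (fst b) = 0 \<and> A (fst b) (fst a) = 0"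
      then have "rho a = id \<or> rho b = id" by (auto simp: rho_def)
      moreover have "(rho a \<circ> rho b) ^^ k = rho a \<circ> rho b \<circ> (rho a \<circ> rho b)" using h by (simp add: numeral_eq_Suc)
      ultimately show ?thesis using rho_inv[of a] rho_inv[of b] by (auto simp: comp_assoc)
    qed
  qed
qed

definition C :: "'i \<times> nat \<Rightarrow> 'i \<times> nat \<Rightarrow> int" where
  "C a b = (if a = b then 2 else if A (fst a) (fst a) = 2 \<and> A (fst b) (fst b) = 2 then A (fst a) (fst b)
     else if A (fst a) (fst b) = 0 then 0 else -2)"

definition pig :: "'i \<times> nat \<Rightarrow> ('i \<times> nat \<Rightarrow> complex) \<Rightarrow> ('i \<times> nat \<Rightarrow> complex)" where
  "pig a f = (\<lambda>t. f t - f a * of_int (C a t))"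

lemma pig_rpair0: "rpair0 (\<lambda>c f t. c * f t) (\<lambda>f. f a) (\<lambda>f. f b) (\<lambda>t. of_int (C a t)) (\<lambda>t. of_int (C b t)) (C b a) (C a b)"
  unfolding rpair0_def by (auto simp: algebra_simps C_def)

lemma pig_T: "rpair0.T (\<lambda>c f t. c * f t) (\<lambda>f. f a) (\<lambda>f. f b) (\<lambda>t. of_int (C a t)) (\<lambda>t. of_int (C b t)) = pig a \<circ> pig b"
  unfolding rpair0.T_def[OF pig_rpair0] rpair0.Ri_def[OF pig_rpair0] rpair0.Rj_def[OF pig_rpair0] pig_def
  by (auto simp: fun_eq_iff)

lemma pig_inv: "pig a \<circ> pig a = id"
  by (auto simp: fun_eq_iff pig_def C_def algebra_simps)

lemma pig_pow: "(\<And>X Y. (step4 (of_int (C b a)) (of_int (C a b)) X Y ^^ k) (0, 0) = (0, 0)) \<Longrightarrow> (pig a \<circ> pig b) ^^ k = id"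
  using rpair0.T_pow_id[OF pig_rpair0[of a b]] pig_T[of a b] by metis

lemma pig_rel: "a \<in> tilde_I A \<Longrightarrow> b \<in> tilde_I A \<Longrightarrow> cox_mat A ord a b = enat k \<Longrightarrow> (pig a \<circ> pig b) ^^ k = id"
proof -
  assume ab: "a \<in> tilde_I A" "b \<in> tilde_I A" and k: "cox_mat A ord a b = enat k"
  show ?thesis
  proof (cases "a = b")
    case True then show ?thesis using k pig_inv by (simp add: one_enat_def)
  next
    case False
    from cox_cases[OF ab False k] show ?thesis
    proof
      assume h: "A (fst a) (fst a) = 2 \<and> A (fst b) (fst b) = 2 \<and> fst a \<noteq> fst b \<and> ord (fst a) (fst b) = enat k"
      then have Cab: "C a b = A (fst a) (fst b)" "C b a = A (fst b) (fst a)" using False by (auto simp: C_def)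
      have off: "A (fst a) (fst b) \<le> 0" "A (fst b) (fst a) \<le> 0" using A_off h by auto
      from ord_fin_pq[of "fst a" "fst b" k] h
      consider "A (fst a) (fst b) = 0 \<and> A (fst b) (fst a) = 0 \<and> k = 2"
        | "A (fst a) (fst b) * A (fst b) (fst a) = 1 \<and> k = 3"
        | "A (fst a) (fst b) * A (fst b) (fst a) = 2 \<and> k = 4"
        | "A (fst a) (fst b) * A (fst b) (fst a) = 3 \<and> k = 6" by blast
      then show ?thesis
      proof cases
        case 1 then show ?thesis using Cab s4_00 by (intro pig_pow) simp
      next
        case 2
        then have "A (fst a) (fst b) \<noteq> 0" "A (fst b) (fst a) \<noteq> 0" by auto
        then have "A (fst a) (fst b) \<le> -1" "A (fst b) (fst a) \<le> -1" using off by auto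
        then have "A (fst a) (fst b) = -1 \<and> A (fst b) (fst a) = -1" using pq_cases 2 by fastforce
        then show ?thesis using Cab s4_11 2 by (intro pig_pow) simp
      next
        case 3
        then have "A (fst a) (fst b) \<noteq> 0" "A (fst b) (fst a) \<noteq> 0" by auto
        then have "A (fst a) (fst b) \<le> -1" "A (fst b) (fst a) \<le> -1" using off by auto
        then have "(A (fst b) (fst a) = -1 \<and> A (fst a) (fst b) = -2) \<or> (A (fst b) (fst a) = -2 \<and> A (fst a) (fst b) = -1)"
          using pq_cases[of "A (fst a) (fst b)" "A (fst b) (fst a)"] 3 by auto
        then show ?thesis using Cab s4_12 s4_21 3 by (intro pig_pow) auto
      next
        case 4
        then have "A (fst a) (fst b) \<noteq> 0" "A (fst b) (fst a) \<noteq> 0" by auto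
        then have "A (fst a) (fst b) \<le> -1" "A (fst b) (fst a) \<le> -1" using off by auto
        then have "(A (fst b) (fst a) = -1 \<and> A (fst a) (fst b) = -3) \<or> (A (fst b) (fst a) = -3 \<and> A (fst a) (fst b) = -1)"
          using pq_cases[of "A (fst a) (fst b)" "A (fst b) (fst a)"] 4 by auto
        then show ?thesis using Cab s4_13 s4_31 4 by (intro pig_pow) auto
      qed
    next
      assume h: "\<not> (A (fst a) (fst a) = 2 \<and> A (fst b) (fst b) = 2) \<and> k = 2 \<and> A (fst a) (fst b) = 0 \<and> A (fst b) (fst a) = 0"
      then have "C a b = 0" "C b a = 0" using False by (auto simp: C_def)
      then show ?thesis using h s4_00 by (intro pig_pow) simp
    qed
  qed
qed

lemma pig_one: "a \<noteq> b \<Longrightarrow> pig a \<circ> pig b \<noteq> id"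
proof
  assume ne: "a \<noteq> b" and h: "pig a \<circ> pig b = id"
  let ?d = "\<lambda>t. if t = a then (1::complex) else 0"
  have "(pig a \<circ> pig b) ?d a = -1" using ne by (simp add: pig_def C_def)
  then show False using h by simp
qed

lemma pig_inf:
  assumes ne: "a \<noteq> b" and C: "C a b = -2" "C b a = -2"
  shows "((pig a \<circ> pig b) ^^ d) (\<lambda>t. if t = b then 1 else 0) a = - 2 * of_nat d
     \<and> ((pig a \<circ> pig b) ^^ d) (\<lambda>t. if t = b then 1 else 0) b = 2 * of_nat d + 1"
proof -
  let ?F = "pig a \<circ> pig b"
  have Cd: "C x x = 2" for x by (simp add: C_def)
  have Fa: "?F g a = - (g a + 2 * g b)" and Fb: "?F g b = 2 * g a + 3 * g b" for g
    using C ne by (auto simp: pig_def Cd algebra_simps)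
  show ?thesis
  proof (induction d)
    case 0 then show ?case using ne by simp
  next
    case (Suc d)
    have e: "(?F ^^ Suc d) (\<lambda>t. if t = b then 1 else 0) = ?F ((?F ^^ d) (\<lambda>t. if t = b then 1 else 0))" by simp
    show ?case unfolding e Fa Fb using Suc.IH by (simp add: algebra_simps comp_def)
  qed
qed

end

context setting begin

lemma dih:
  assumes ab: "a \<in> tilde_I A" "b \<in> tilde_I A" "a \<noteq> b" and d: "0 < d" "enat d < cox_mat A ord a b"
  shows "\<not> cong_cl (crel (tilde_I A) (cox_mat A ord)) (alt (2*d) a b) []"
proof
  assume E: "cong_cl (crel (tilde_I A) (cox_mat A ord)) (alt (2*d) a b) []"
  show False
  proof (cases "A (fst a) (fst a) = 2 \<and> A (fst b) (fst b) = 2")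
    case True
    then have ne: "fst a \<noteq> fst b" using tI_real ab by (metis prod.expand)
    have "whom rho (alt (2*d) a b) = whom rho []"
      using whom_crel[OF E] rho_rel by blast
    then have Td: "(srefl scale alpha coroot (fst a) \<circ> srefl scale alpha coroot (fst b)) ^^ d = id"
      using True by (simp add: whom_alt rho_def)
    have om: "cox_mat A ord a b = ord (fst a) (fst b)" using True ab(3) by (simp add: cox_mat_def)
    let ?T = "srefl scale alpha coroot (fst a) \<circ> srefl scale alpha coroot (fst b)"
    have ex: "\<exists>m>0. (?T ^^ m) = id" using Td d by blast
    then have "ord (fst a) (fst b) = enat (LEAST m. m > 0 \<and> (?T ^^ m) = id)"
      unfolding rr_order_def map_order_def by simp
    moreover have "(LEAST m. m > 0 \<and> (?T ^^ m) = id) \<le> d" using Td d by (intro Least_le) simp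
    ultimately show False using d om by simp
  next
    case False
    have "whom pig (alt (2*d) a b) = whom pig []"
      using whom_crel[OF E] pig_rel by blast
    then have Pd: "(pig a \<circ> pig b) ^^ d = id" by (simp add: whom_alt)
    show False
    proof (cases "A (fst a) (fst b) = 0")
      case True
      then have "cox_mat A ord a b = 2" using False ab(3) A_zero by (auto simp: cox_mat_def)
      then have "d = 1" using d by (simp add: numeral_eq_enat)
      then show False using Pd pig_one[OF ab(3)] by simp
    next
      case nz: False
      then have "C a b = -2" "C b a = -2" using False ab(3) A_zero by (auto simp: C_def)
      from pig_inf[OF ab(3) this, of d] Pd have "(1::complex) = 2 * of_nat d + 1" by simp
      then show False using d by simp
    qed
  qed
qed

end

sublocale setting \<subseteq> cx: coxK "tilde_I A" "cox_mat A (rr_order scale alpha coroot)" "{(i, 1) | i. A i i = 2}"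
proof unfold_locales
  fix a assume "a \<in> tilde_I A" then show "cox_mat A (rr_order scale alpha coroot) a a = 1" by (simp add: cox_mat_def)
next
  fix a b assume "a \<in> tilde_I A" "b \<in> tilde_I A"
  then show "cox_mat A (rr_order scale alpha coroot) a b = cox_mat A (rr_order scale alpha coroot) b a"
    by (rule cox_sym)
next
  fix a b assume "a \<in> tilde_I A" "b \<in> tilde_I A" "a \<noteq> b"
  then show "2 \<le> cox_mat A (rr_order scale alpha coroot) a b" by (rule cox_ge2)
next
  fix a b d assume "a \<in> tilde_I A" "b \<in> tilde_I A" "a \<noteq> b" "0 < d" "enat d < cox_mat A (rr_order scale alpha coroot) a b"
  then show "\<not> cong_cl (crel (tilde_I A) (cox_mat A (rr_order scale alpha coroot))) (alt (2 * d) a b) []"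
    by (rule dih)
next
  show "{(i, 1) | i. A i i = 2} \<subseteq> tilde_I A" unfolding tilde_I_def by auto
next
  fix a b n assume a: "a \<in> tilde_I A - {(i, 1) | i. A i i = 2}" and b: "b \<in> tilde_I A" and ne: "a \<noteq> b"
    and n: "cox_mat A (rr_order scale alpha coroot) a b = enat n"
  have "A (fst a) (fst a) \<noteq> 2" using a tI_real[of a] by (metis (mono_tags, lifting) DiffD1 DiffD2 mem_Collect_eq prod.collapse)
  then have "n = 2" using cox_cases[OF _ b ne n] a by auto
  then show "even n" by simp
qed


fun oiR :: "('i \<Rightarrow> 'i \<Rightarrow> int) \<Rightarrow> ('i \<Rightarrow> nat) \<Rightarrow> 'i list \<Rightarrow> ('i \<times> nat) list" where
  "oiR A c [] = []"
| "oiR A c (x # xs) = (x, if A x x = 2 then 1 else c x + count_list (x # xs) x) # oiR A c xs"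

lemma oi_Cons: "ordered_index A (x # xs) = (x, if A x x = 2 then 1 else count_list (x # xs) x) # ordered_index A xs"
proof -
  have "[0..<length (x # xs)] = 0 # map Suc [0..<length xs]"
    using map_Suc_upt[of 0 "length xs"] upt_conv_Cons[of 0 "Suc (length xs)"] by simp
  then show ?thesis unfolding ordered_index_def by simp
qed

lemma oi_eq: "ordered_index A xs = oiR A (\<lambda>_. 0) xs"
  by (induction xs) (auto simp: oi_Cons, simp add: ordered_index_def)

lemma oiR_append: "oiR A c (xs @ ys) = oiR A (\<lambda>i. c i + count_list ys i) xs @ oiR A c ys"
  by (induction xs) auto

lemma oiR_cong: "(\<And>i. A i i \<noteq> 2 \<Longrightarrow> c i = c' i) \<Longrightarrow> oiR A c xs = oiR A c' xs"
  by (induction xs) auto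

lemma map_fst_oiR[simp]: "map fst (oiR A c xs) = xs"
  by (induction xs) auto

lemma oiR_real: "(\<And>x. x \<in> set w \<Longrightarrow> A x x = 2) \<Longrightarrow> oiR A c w = map (\<lambda>x. (x, 1)) w"
  by (induction w) auto

lemma map_alt: "map f (alt n a b) = alt n (f a) (f b)"
  by (induction n arbitrary: a b) auto

lemma oiR_tI: "oiR A c xs \<in> lists (tilde_I A)"
  by (induction xs) (auto simp: tilde_I_def)

lemma oiR_lab: "(i, n) \<in> set (oiR A c xs) \<Longrightarrow> A i i \<noteq> 2 \<Longrightarrow> n \<le> c i + count_list xs i"
  by (induction xs) auto

lemma oiR_count: "A (fst a) (fst a) \<noteq> 2 \<Longrightarrow> count_list (oiR A c xs) a \<le> 1"
proof (induction xs)
  case Nil then show ?case by simp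
next
  case (Cons x xs)
  show ?case
  proof (cases "a = (x, if A x x = 2 then 1 else c x + count_list (x # xs) x)")
    case True
    then have "a \<notin> set (oiR A c xs)" using oiR_lab[of x _ A c xs] Cons.prems by fastforce
    then show ?thesis using True by (simp add: count_list_0_iff)
  next
    case False then show ?thesis using Cons by auto
  qed
qed

lemma count_notin: "x \<notin> set w \<Longrightarrow> count_list w x = 0"
  by (simp add: count_list_0_iff)

lemma gen_inv: "(\<And>x. x \<in> set w \<Longrightarrow> cong_cl R [x, x] []) \<Longrightarrow> cong_cl R (w @ rev w) []"
proof (induction w)
  case Nil then show ?case by (simp add: cong_cl.refl)
next
  case (Cons s w)
  have IH: "cong_cl R (w @ rev w) []" using Cons by auto
  have "cong_cl R ([s] @ (w @ rev w) @ [s]) ([s] @ [] @ [s])"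
    by (rule cong_cl_ctx[OF IH])
  moreover have "cong_cl R [s, s] []" using Cons.prems by auto
  ultimately show ?case by (auto intro: cong_cl.trans)
qed

lemma gen_braid:
  assumes ii: "cong_cl R [i, i] []" and jj: "cong_cl R [j, j] []" and h: "cong_cl R (alt (2*n) i j) []"
  shows "cong_cl R (alt n i j) (alt n j i)"
proof -
  have inv: "\<And>x. x \<in> set w \<Longrightarrow> cong_cl R [x, x] []" if "set w \<subseteq> {i, j}" for w
    using that ii jj by auto
  have "alt (2*n) i j = alt n i j @ rev (alt n j i)"
    using alt_add[of n n i j] by (simp add: rev_alt mult_2)
  then have h1: "cong_cl R (alt n i j @ rev (alt n j i)) []" using h by simp
  have "set (rev (alt n j i)) \<subseteq> {i, j}" using set_alt[of n j i] by auto
  then have h2: "cong_cl R (rev (alt n j i) @ alt n j i) []" using gen_inv[of "rev (alt n j i)" R] inv by simp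
  have "cong_cl R (alt n i j @ (rev (alt n j i) @ alt n j i)) (alt n i j @ [])"
    using cong_cl_app[OF cong_cl.refl h2] .
  moreover have "cong_cl R ((alt n i j @ rev (alt n j i)) @ alt n j i) ([] @ alt n j i)"
    using cong_cl_app[OF h1 cong_cl.refl] .
  ultimately show ?thesis by (metis append.assoc append_Nil append_Nil2 cong_cl.sym cong_cl.trans)
qed

context setting begin

lemma C_rel_eq: "C_rel A ord = crel (tilde_I A) (cox_mat A ord)"
  by (simp add: fun_eq_iff C_rel_def crel_def)

lemma nK_imag: "a \<in> tilde_I A - {(i, 1) | i. A i i = 2} \<Longrightarrow> A (fst a) (fst a) \<noteq> 2"
  using tI_real[of a] by (metis (mono_tags, lifting) DiffD1 DiffD2 mem_Collect_eq prod.collapse)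

lemma oiR_simple: "cx.simple (oiR A c xs)"
  unfolding cx.simple_def using oiR_count nK_imag by blast

lemma W_counts: "W_rel A ord u v \<Longrightarrow> A i i \<noteq> 2 \<Longrightarrow> count_list u i = count_list v i"
proof -
  assume W: "W_rel A ord u v" and im: "A i i \<noteq> 2"
  from W consider (a) x where "A x x = 2" "u = [x, x]" "v = []"
    | (b) x y m where "A x x = 2" "A y y = 2" "u = concat (replicate m [x, y]) \<or> u = concat (replicate m [y, x])" "v = []"
    | (c) x y where "(u = [x, y] \<and> v = [y, x]) \<or> (u = [y, x] \<and> v = [x, y])"
    unfolding W_rel_def by blast
  then show ?thesis
  proof cases
    case a then show ?thesis using im by auto
  next
    case b
    then have "i \<notin> set u" using im set_alt[of "2*m" x y] set_alt[of "2*m" y x]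
      by (auto simp: concat_replicate_alt)
    then show ?thesis using b by (simp add: count_notin)
  next
    case c then show ?thesis by auto
  qed
qed

lemma W_step: "W_rel A ord u v \<Longrightarrow> cx.E (oiR A c u) (oiR A c v)"
proof -
  assume W: "W_rel A ord u v"
  from W consider (a) i where "A i i = 2" "u = [i, i]" "v = []"
    | (b) i j m where "i \<noteq> j" "A i i = 2" "A j j = 2" "ord i j = enat m"
        "u = concat (replicate m [i, j]) \<or> u = concat (replicate m [j, i])" "v = []"
    | (c) i j where "A i i \<noteq> 2" "j \<noteq> i" "A i j = 0" "(u = [i, j] \<and> v = [j, i]) \<or> (u = [j, i] \<and> v = [i, j])"
    unfolding W_rel_def by blast
  then show ?thesis
  proof cases
    case a
    have "(i, 1) \<in> tilde_I A" using a unfolding tilde_I_def by auto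
    then show ?thesis using a cx.E_ss by simp
  next
    case b
    have tI: "(i, 1) \<in> tilde_I A" "(j, 1) \<in> tilde_I A" using b unfolding tilde_I_def by auto
    have m1: "cox_mat A ord (i, 1) (j, 1) = enat m" using b by (simp add: cox_mat_def)
    have m2: "cox_mat A ord (j, 1) (i, 1) = enat m" using b ord_sym by (simp add: cox_mat_def)
    have o1: "oiR A c (alt (2*m) i j) = alt (2*m) (i, 1) (j, 1)"
      using oiR_real[of "alt (2*m) i j" A c] set_alt[of "2*m" i j] b by (auto simp: map_alt)
    have o2: "oiR A c (alt (2*m) j i) = alt (2*m) (j, 1) (i, 1)"
      using oiR_real[of "alt (2*m) j i" A c] set_alt[of "2*m" j i] b by (auto simp: map_alt)
    show ?thesis using b o1 o2 cx.E_alt[OF tI m1] cx.E_alt[OF tI(2,1) m2]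
      by (auto simp: concat_replicate_alt)
  next
    case c
    let ?a = "(i, c i + 1)" and ?b = "(j, if A j j = 2 then 1 else c j + 1)"
    have ij: "oiR A c [i, j] = [?a, ?b]" "oiR A c [j, i] = [?b, ?a]" using c by auto
    have tI: "?a \<in> tilde_I A" "?b \<in> tilde_I A" using c unfolding tilde_I_def by auto
    have "?a \<noteq> ?b" using c by simp
    then have m: "cox_mat A ord ?a ?b = enat 2" using c by (simp add: cox_mat_def numeral_eq_enat)
    have "cx.E (alt 2 ?a ?b) (alt 2 ?b ?a)" using cx.braid_E[OF tI m] .
    then have "cx.E [?a, ?b] [?b, ?a]" by (simp add: numeral_eq_Suc)
    then show ?thesis using c ij cx.E_sym by auto
  qed
qed

lemma WD_gen: "cong_cl (W_rel A ord) u v \<Longrightarrow> cx.E (oiR A c u) (oiR A c v)"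
proof (induction arbitrary: c rule: cong_cl.induct)
  case (base u v xs ys)
  have e1: "oiR A (\<lambda>i. c i + count_list (u @ ys) i) xs = oiR A (\<lambda>i. c i + count_list (v @ ys) i) xs"
    using W_counts[OF base(1)] by (intro oiR_cong) simp
  have "cx.E (oiR A (\<lambda>i. c i + count_list ys i) u) (oiR A (\<lambda>i. c i + count_list ys i) v)"
    using W_step[OF base(1)] .
  then show ?case using cx.E_ctx e1 by (simp add: oiR_append)
next
  case (refl u) then show ?case by simp
next
  case (sym u v) then show ?case using cx.E_sym by blast
next
  case (trans u v w) then show ?case using cx.E_trans by blast
qed

lemma WD: "cong_cl (W_rel A ord) xs ys \<Longrightarrow> cx.E (ordered_index A xs) (ordered_index A ys)"
  unfolding oi_eq using WD_gen .

lemma qr_W: "cx.qr u v \<Longrightarrow> cong_cl (W_rel A ord) (map fst u) (map fst v)"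
proof -
  assume "cx.qr u v"
  then consider (K) s where "s \<in> {(i, 1) | i. A i i = 2}" "u = [s, s]" "v = []" | (B) "cx.br u v"
    unfolding cx.qr_def by blast
  then show ?thesis
  proof cases
    case K
    then obtain i where "A i i = 2" "s = (i, 1)" by blast
    then have "W_rel A ord (map fst u) (map fst v)" using K unfolding W_rel_def by auto
    then show ?thesis by (rule cong_cl_base1)
  next
    case B
    then obtain a b n where ab: "a \<in> tilde_I A" "b \<in> tilde_I A" "a \<noteq> b" "cox_mat A ord a b = enat n"
      and u: "u = alt n a b" and v: "v = alt n b a" unfolding cx.br_def by blast
    have mu: "map fst u = alt n (fst a) (fst b)" "map fst v = alt n (fst b) (fst a)"
      using u v by (simp_all add: map_alt)
    from cox_cases[OF ab] show ?thesis
    proof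
      assume h: "A (fst a) (fst a) = 2 \<and> A (fst b) (fst b) = 2 \<and> fst a \<noteq> fst b \<and> ord (fst a) (fst b) = enat n"
      then have "n \<in> {2,3,4,6}" using ord_fin by blast
      then have "W_rel A ord (alt (2*n) (fst a) (fst b)) []" using h unfolding W_rel_def
        by (auto simp: concat_replicate_alt)
      moreover have "W_rel A ord [fst a, fst a] []" "W_rel A ord [fst b, fst b] []"
        using h unfolding W_rel_def by auto
      ultimately show ?thesis using mu gen_braid cong_cl_base1 by metis
    next
      assume h: "\<not> (A (fst a) (fst a) = 2 \<and> A (fst b) (fst b) = 2) \<and> n = 2 \<and> A (fst a) (fst b) = 0 \<and> A (fst b) (fst a) = 0"
      then have mu2: "map fst u = [fst a, fst b]" "map fst v = [fst b, fst a]" using mu by (simp_all add: numeral_eq_Suc)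
      show ?thesis
      proof (cases "fst a = fst b")
        case True then show ?thesis using mu2 by (simp add: cong_cl.refl)
      next
        case False
        have "W_rel A ord [fst a, fst b] [fst b, fst a]"
        proof (cases "A (fst a) (fst a) = 2")
          case True
          then have "A (fst b) (fst b) \<noteq> 2" using h by simp
          then show ?thesis unfolding W_rel_def using h False by blast
        next
          case nr: False
          then show ?thesis unfolding W_rel_def using h False by metis
        qed
        then show ?thesis using mu2 cong_cl_base1 by metis
      qed
    qed
  qed
qed

lemma INJ: "cx.E (ordered_index A xs) (ordered_index A ys) \<Longrightarrow> cong_cl (W_rel A ord) xs ys"
proof -
  assume E: "cx.E (ordered_index A xs) (ordered_index A ys)"
  have "cx.Q (oiR A (\<lambda>_. 0) xs) (oiR A (\<lambda>_. 0) ys)"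
    using cx.tits[OF oiR_tI oiR_tI oiR_simple oiR_simple] E by (simp add: oi_eq)
  then have "cong_cl (W_rel A ord) (map fst (oiR A (\<lambda>_. 0) xs)) (map fst (oiR A (\<lambda>_. 0) ys))"
    using cong_cl_map qr_W by blast
  then show ?thesis by simp
qed

end

theorem lemma2p2p5:
  fixes A :: "'i::countable \<Rightarrow> 'i \<Rightarrow> int"
    and scale :: "complex \<Rightarrow> 'v::ab_group_add \<Rightarrow> 'v"
    and alpha :: "'i \<Rightarrow> 'v"
    and coroot :: "'i \<Rightarrow> 'v \<Rightarrow> complex"
  defines "ord \<equiv> rr_order scale alpha coroot"
  assumes "borcherds_cartan A"
    and "vector_space scale"
    and "\<forall>i. Vector_Spaces.linear scale (*) (coroot i)"
    and "\<forall>i j. coroot i (alpha j) = of_int (A i j)"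
    and "inj alpha"
    and "\<not> module.dependent scale (range alpha)"
  shows "\<exists>\<sigma>. (\<forall>xs. \<sigma> (W_class A ord xs) = C_class A ord (ordered_index A xs))
            \<and> bij_betw \<sigma> (W_monoid A ord) (V_set A ord)"
proof -
  interpret setting A scale alpha coroot using assms(2-7) by (simp add: setting_def)
  let ?W = "W_rel A ord"
  have Wc: "W_class A ord xs = W_class A ord ys \<longleftrightarrow> cong_cl ?W xs ys" for xs ys
  proof
    assume "W_class A ord xs = W_class A ord ys"
    moreover have "ys \<in> W_class A ord ys" unfolding W_class_def by (simp add: cong_cl.refl)
    ultimately show "cong_cl ?W xs ys" unfolding W_class_def by auto
  next
    assume "cong_cl ?W xs ys"
    then show "W_class A ord xs = W_class A ord ys" unfolding W_class_def
      by (auto intro: cong_cl.trans cong_cl.sym)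
  qed
  have Cc: "C_class A ord (ordered_index A xs) = C_class A ord (ordered_index A ys) \<longleftrightarrow>
      cong_cl (W_rel A ord) xs ys" for xs ys
  proof
    assume h: "C_class A ord (ordered_index A xs) = C_class A ord (ordered_index A ys)"
    have "ordered_index A ys \<in> C_class A ord (ordered_index A ys)"
      unfolding C_class_def using oiR_tI by (simp add: oi_eq cong_cl.refl)
    then have "cong_cl (C_rel A ord) (ordered_index A xs) (ordered_index A ys)"
      using h unfolding C_class_def by auto
    then show "cong_cl (W_rel A ord) xs ys" using INJ C_rel_eq unfolding ord_def by simp
  next
    assume "cong_cl (W_rel A ord) xs ys"
    then have "cong_cl (C_rel A ord) (ordered_index A xs) (ordered_index A ys)"
      using WD C_rel_eq unfolding ord_def by simp
    then show "C_class A ord (ordered_index A xs) = C_class A ord (ordered_index A ys)"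
      unfolding C_class_def by (auto intro: cong_cl.trans cong_cl.sym)
  qed
  define \<sigma> where "\<sigma> X = C_class A ord (ordered_index A (SOME xs. X = W_class A ord xs))" for X
  have s: "\<sigma> (W_class A ord xs) = C_class A ord (ordered_index A xs)" for xs
  proof -
    have "W_class A ord xs = W_class A ord (SOME ys. W_class A ord xs = W_class A ord ys)"
      by (rule someI[of _ xs]) simp
    then show ?thesis unfolding \<sigma>_def using Wc Cc by metis
  qed
  have "inj_on \<sigma> (W_monoid A ord)"
  proof (rule inj_onI)
    fix X Y assume "X \<in> W_monoid A ord" "Y \<in> W_monoid A ord" "\<sigma> X = \<sigma> Y"
    then obtain xs ys where "X = W_class A ord xs" "Y = W_class A ord ys"
      "C_class A ord (ordered_index A xs) = C_class A ord (ordered_index A ys)"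
      unfolding W_monoid_def using s by auto
    then show "X = Y" using Wc Cc by metis
  qed
  moreover have "\<sigma> ` W_monoid A ord = V_set A ord"
    unfolding W_monoid_def V_set_def using s by auto
  ultimately show ?thesis using s unfolding bij_betw_def by blast
qed


end
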